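(* Let $H$ be a Hilbert space, let $\mathbf{a}=[a_1,\dots,a_\ell]$ be a row and $\mathbf{b}=[b_1,\dots,b_\ell]^t$ a column of operators in $\mathcal{B}(H)$, and let $Tx=\sum_{j=1}^\ell a_jxb_j$ ($x\in\mathcal{B}(H)$). Then \[ \|T\|=\sup\left\{\left\|\sqrt{Q(\mathbf{b},\eta)^t}\,\mathbf{a}^*\right\|_{S1}:\eta\in H,\ \|\eta\|=1\right\}. \]
   Context: For $\eta\in H$, $Q(\mathbf{b},\eta)=(\langle b_j\eta,b_i\eta\rangle)_{i,j=1}^\ell\in M_\ell(\mathbb{C})$, which is positive semidefinite; $\sqrt{Q(\mathbf{b},\eta)^t}$ is the positive semidefinite square root of its transpose. $\mathbf{a}^*=[a_1^*,\dots,a_\ell^*]^t$ is a column of operators, and for a scalar matrix $\alpha=(\alpha_{jk})\in M_\ell(\mathbb{C})$, $\alpha\mathbf{a}^*$ is the column whose $j$-th entry is $\sum_k\alpha_{jk}a_k^*$. On $H^\ell$ define the norm $\|(\xi_1,\dots,\xi_\ell)\|_{S1}=\operatorname{trace}\sqrt{(\langle\xi_i,\xi_j\rangle)_{i,j=1}^\ell}$. For a column $\mathbf{c}=[c_1,\dots,c_\ell]^t$ of operators in $\mathcal{B}(H)$, regarded as an operator $H\to H^\ell$, $\xi\mapsto(c_1\xi,\dots,c_\ell\xi)$, $\|\mathbf{c}\|_{S1}$ denotes its operator norm from $H$ (Hilbert norm) to $(H^\ell,\|\cdot\|_{S1})$. $\|T\|$ is the operator norm on $\mathcal{B}(H)$.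 *)

theory Defs
  imports "HOL-Analysis.Analysis"
begin

class chilbert_space = banach +
  fixes scaleC :: "complex \<Rightarrow> 'a \<Rightarrow> 'a"
    and cinner :: "'a \<Rightarrow> 'a \<Rightarrow> complex"
  assumes scaleC_add_right: "scaleC c (x + y) = scaleC c x + scaleC c y"
    and scaleC_add_left: "scaleC (c + d) x = scaleC c x + scaleC d x"
    and scaleC_scaleC: "scaleC c (scaleC d x) = scaleC (c * d) x"
    and scaleC_one: "scaleC 1 x = x"
    and scaleR_scaleC: "scaleR r x = scaleC (complex_of_real r) x"
    and cinner_add_left: "cinner (x + y) z = cinner x z + cinner y z"
    and cinner_scaleC_left: "cinner (scaleC c x) y = c * cinner x y"
    and cinner_commute: "cinner x y = cnj (cinner y x)"
    and cinner_self_norm: "cinner x x = complex_of_real ((norm x)\<^sup>2)"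

definition bounded_clinear :: "('a::chilbert_space \<Rightarrow> 'a) \<Rightarrow> bool" where
  "bounded_clinear f \<longleftrightarrow> bounded_linear f \<and> (\<forall>c x. f (scaleC c x) = scaleC c (f x))"

definition adj :: "('a::chilbert_space \<Rightarrow> 'a) \<Rightarrow> ('a \<Rightarrow> 'a)" where
  "adj f = (THE g. \<forall>x y. cinner (f x) y = cinner x (g y))"

definition psd_mat :: "complex^'n^'n \<Rightarrow> bool" where
  "psd_mat M \<longleftrightarrow> (\<forall>i j. M$i$j = cnj (M$j$i)) \<and>
     (\<forall>v::complex^'n. 0 \<le> Re (\<Sum>i\<in>UNIV. \<Sum>j\<in>UNIV. cnj (v$i) * M$i$j * v$j))"

definition msqrt :: "complex^'n^'n \<Rightarrow> complex^'n^'n" where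
  "msqrt M = (THE S. psd_mat S \<and> S ** S = M)"

definition mtrace :: "complex^'n^'n \<Rightarrow> complex" where
  "mtrace M = (\<Sum>i\<in>UNIV. M$i$i)"

definition Qmat :: "('n \<Rightarrow> ('a::chilbert_space \<Rightarrow> 'a)) \<Rightarrow> 'a \<Rightarrow> complex^'n^'n" where
  "Qmat b \<eta> = (\<chi> i j. cinner (b j \<eta>) (b i \<eta>))"

definition S1_norm_vec :: "('n::finite \<Rightarrow> 'a::chilbert_space) \<Rightarrow> real" where
  "S1_norm_vec \<xi> = Re (mtrace (msqrt (\<chi> i j. cinner (\<xi> i) (\<xi> j))))"

definition S1_norm_col :: "('n::finite \<Rightarrow> ('a::chilbert_space \<Rightarrow> 'a)) \<Rightarrow> real" where
  "S1_norm_col c = Sup {S1_norm_vec (\<lambda>i. c i \<xi>) | \<xi>. norm \<xi> \<le> 1}"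

definition mat_times_adj_col ::
  "complex^'n^'n \<Rightarrow> ('n::finite \<Rightarrow> ('a::chilbert_space \<Rightarrow> 'a)) \<Rightarrow> ('n \<Rightarrow> ('a \<Rightarrow> 'a))" where
  "mat_times_adj_col \<alpha> a = (\<lambda>j \<xi>. \<Sum>k\<in>UNIV. scaleC (\<alpha>$j$k) (adj (a k) \<xi>))"

definition elem_op ::
  "('n::finite \<Rightarrow> ('a::chilbert_space \<Rightarrow> 'a)) \<Rightarrow> ('n \<Rightarrow> ('a \<Rightarrow> 'a)) \<Rightarrow> ('a \<Rightarrow> 'a) \<Rightarrow> ('a \<Rightarrow> 'a)" where
  "elem_op a b x = (\<lambda>\<xi>. \<Sum>j\<in>UNIV. a j (x (b j \<xi>)))"

definition BH_map_norm :: "(('a::chilbert_space \<Rightarrow> 'a) \<Rightarrow> ('a \<Rightarrow> 'a)) \<Rightarrow> real" where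
  "BH_map_norm T = Sup {onorm (T x) | x. bounded_clinear x \<and> onorm x \<le> 1}"

end

theory Submission
  imports Defs
begin



lemma scaleC_zero_right[simp]: "scaleC c 0 = 0"
  using scaleC_add_right[of c 0 0] by simp
lemma scaleC_zero_left[simp]: "scaleC 0 x = 0"
  using scaleC_add_left[of 0 0 x] by simp
lemma scaleC_minus_right: "scaleC c (- x) = - (scaleC c x)"
proof -
  have h: "scaleC c x + scaleC c (-x) = 0" using scaleC_add_right[of c x "-x"] by simp
  show ?thesis using minus_unique[OF h] by (simp add: eq_commute)
qed
lemma scaleC_minus_left: "scaleC (- c) x = - (scaleC c x)"
proof -
  have h: "scaleC c x + scaleC (-c) x = 0" using scaleC_add_left[of c "-c" x] by simp
  show ?thesis using minus_unique[OF h] by (simp add: eq_commute)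
qed
lemma scaleC_diff_right: "scaleC c (x - y) = scaleC c x - scaleC c y"
  by (simp only: diff_conv_add_uminus scaleC_add_right scaleC_minus_right)
lemma scaleC_diff_left: "scaleC (c - d) x = scaleC c x - scaleC d x"
  by (simp only: diff_conv_add_uminus scaleC_add_left scaleC_minus_left)
lemma scaleC_sum_right: "scaleC c (sum f A) = (\<Sum>i\<in>A. scaleC c (f i))"
  by (induction A rule: infinite_finite_induct) (auto simp: scaleC_add_right)
lemma scaleC_sum_left: "scaleC (sum f A) x = (\<Sum>i\<in>A. scaleC (f i) x)"
  by (induction A rule: infinite_finite_induct) (auto simp: scaleC_add_left)

lemma cinner_zero_left[simp]: "cinner 0 y = 0"
  using cinner_add_left[of 0 0 y] by simp
lemma cinner_minus_left: "cinner (- x) y = - (cinner x y)"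
proof -
  have h: "cinner x y + cinner (-x) y = 0" using cinner_add_left[of x "-x" y] by simp
  show ?thesis using minus_unique[OF h] by (simp add: eq_commute)
qed
lemma cinner_diff_left: "cinner (x - y) z = cinner x z - cinner y z"
  by (simp only: diff_conv_add_uminus cinner_add_left cinner_minus_left)
lemma cinner_sum_left: "cinner (sum f A) y = (\<Sum>i\<in>A. cinner (f i) y)"
  by (induction A rule: infinite_finite_induct) (auto simp: cinner_add_left)
lemma cinner_add_right: "cinner x (y + z) = cinner x y + cinner x z"
  by (metis cinner_commute cinner_add_left complex_cnj_add)
lemma cinner_scaleC_right: "cinner x (scaleC c y) = cnj c * cinner x y"
  by (metis cinner_commute cinner_scaleC_left complex_cnj_mult)
lemma cinner_zero_right[simp]: "cinner x 0 = 0"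
  by (metis cinner_commute cinner_zero_left complex_cnj_zero)
lemma cinner_minus_right: "cinner x (- y) = - (cinner x y)"
  by (metis cinner_commute cinner_minus_left complex_cnj_minus)
lemma cinner_diff_right: "cinner x (y - z) = cinner x y - cinner x z"
  by (simp only: diff_conv_add_uminus cinner_add_right cinner_minus_right)
lemma cinner_sum_right: "cinner x (sum f A) = (\<Sum>i\<in>A. cinner x (f i))"
  by (induction A rule: infinite_finite_induct) (auto simp: cinner_add_right)

lemma cinner_self_Re: "Re (cinner x x) = (norm x)\<^sup>2"
  by (simp add: cinner_self_norm)
lemma cinner_self_Im: "Im (cinner x x) = 0"
  by (simp add: cinner_self_norm)
lemma cnj_cinner_self[simp]: "cnj (cinner x x) = cinner x x"
  by (simp add: cinner_self_norm)
lemma cinner_self_eq_0[simp]: "cinner x x = 0 \<longleftrightarrow> x = 0"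
  by (simp add: cinner_self_norm)

lemma mult_cnj_sq: "c * cnj c = (complex_of_real (cmod c))\<^sup>2" "cnj c * c = (complex_of_real (cmod c))\<^sup>2"
  using complex_norm_square[of c] by (simp_all add: mult.commute)

lemma norm_scaleC: "norm (scaleC c x) = cmod c * norm x"
proof -
  have "cinner (scaleC c x) (scaleC c x) = (c * cnj c) * cinner x x"
    by (simp add: cinner_scaleC_left cinner_scaleC_right mult.assoc)
  hence "complex_of_real ((norm (scaleC c x))\<^sup>2) = complex_of_real ((cmod c)\<^sup>2 * (norm x)\<^sup>2)"
    by (simp only: cinner_self_norm complex_norm_square[symmetric] of_real_mult)
  hence "(norm (scaleC c x))\<^sup>2 = (cmod c * norm x)\<^sup>2" by (simp only: of_real_eq_iff power_mult_distrib)
  thus ?thesis by (simp add: power2_eq_iff_nonneg)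
qed

lemma cinner_ext: "(\<And>z. cinner x z = cinner y z) \<Longrightarrow> x = y"
proof -
  assume h: "\<And>z. cinner x z = cinner y z"
  have "cinner (x - y) (x - y) = 0" by (simp add: cinner_diff_left h)
  then show ?thesis by simp
qed

lemma Cauchy_Schwarz: "cmod (cinner x y) \<le> norm x * norm y"
proof (cases "y = 0")
  case True then show ?thesis by simp
next
  case False
  define s where "s = (norm y)\<^sup>2"
  define c where "c = cinner x y"
  define t where "t = c / complex_of_real s"
  have sp: "s > 0" using False by (simp add: s_def)
  have cy: "cinner y x = cnj c" by (simp add: c_def cinner_commute[of y x])
  have yy: "cinner y y = complex_of_real s" by (simp add: s_def cinner_self_norm)
  have "cinner (x - scaleC t y) (x - scaleC t y) =
      cinner x x - cnj t * c - t * cnj c + t * cnj t * complex_of_real s"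
    by (simp add: cinner_diff_left cinner_diff_right cinner_scaleC_left cinner_scaleC_right c_def[symmetric] cy yy algebra_simps)
  also have "cnj t * c = complex_of_real ((cmod c)\<^sup>2 / s)"
    using mult_cnj_sq(2)[of c] by (simp add: t_def)
  also have "t * cnj c = complex_of_real ((cmod c)\<^sup>2 / s)"
    using mult_cnj_sq(1)[of c] by (simp add: t_def)
  also have "t * cnj t * complex_of_real s = complex_of_real ((cmod c)\<^sup>2 / s)"
    using sp mult_cnj_sq(1)[of c] by (simp add: t_def power2_eq_square)
  finally have e: "cinner (x - scaleC t y) (x - scaleC t y) = complex_of_real ((norm x)\<^sup>2 - (cmod c)\<^sup>2 / s)"
    by (simp add: cinner_self_norm)
  have "0 \<le> (norm (x - scaleC t y))\<^sup>2" by simp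
  also have "\<dots> = (norm x)\<^sup>2 - (cmod c)\<^sup>2 / s"
    using e cinner_self_norm[of "x - scaleC t y"] by (metis of_real_eq_iff)
  finally have "(cmod c)\<^sup>2 / s \<le> (norm x)\<^sup>2" by simp
  then have "(cmod c)\<^sup>2 \<le> (norm x)\<^sup>2 * s" using sp by (simp add: divide_le_eq)
  then have "(cmod c)\<^sup>2 \<le> (norm x * norm y)\<^sup>2" by (simp add: s_def power_mult_distrib)
  then show ?thesis unfolding c_def by (rule power2_le_imp_le) simp
qed



lemma norm_sq_cinner: "(norm (x::'a::chilbert_space))\<^sup>2 = Re (cinner x x)"
  by (simp add: cinner_self_Re)

lemma norm_diff_scaleC_sq:
  fixes e n :: "'a::chilbert_space"
  shows "(norm (e - scaleC t n))\<^sup>2 = (norm e)\<^sup>2 - 2 * Re (cnj t * cinner e n) + (cmod t)\<^sup>2 * (norm n)\<^sup>2"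
proof -
  have "cinner (e - scaleC t n) (e - scaleC t n) =
      cinner e e - cnj t * cinner e n - t * cinner n e + t * cnj t * cinner n n"
    by (simp add: cinner_diff_left cinner_diff_right cinner_scaleC_left cinner_scaleC_right algebra_simps)
  also have "t * cinner n e = cnj (cnj t * cinner e n)" by (simp add: cinner_commute[of n e])
  also have "t * cnj t = complex_of_real ((cmod t)\<^sup>2)" using mult_cnj_sq(1)[of t] by simp
  finally have "Re (cinner (e - scaleC t n) (e - scaleC t n)) =
      Re (cinner e e) - 2 * Re (cnj t * cinner e n) + (cmod t)\<^sup>2 * Re (cinner n n)"
    by (simp add: cinner_self_norm)
  then show ?thesis by (simp add: cinner_self_Re)
qed

lemma parallelogram:
  fixes p q :: "'a::chilbert_space"
  shows "(norm (p + q))\<^sup>2 + (norm (p - q))\<^sup>2 = 2 * (norm p)\<^sup>2 + 2 * (norm q)\<^sup>2"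
proof -
  have "cinner (p + q) (p + q) + cinner (p - q) (p - q) = 2 * cinner p p + 2 * cinner q q"
    by (simp add: cinner_add_left cinner_add_right cinner_diff_left cinner_diff_right algebra_simps)
  then have "Re (cinner (p + q) (p + q)) + Re (cinner (p - q) (p - q)) = 2 * Re (cinner p p) + 2 * Re (cinner q q)"
    by (metis plus_complex.sel(1) Re_complex_of_real mult_2 )
  then show ?thesis by (simp add: cinner_self_Re)
qed

lemma closest_point_ortho:
  fixes x0 :: "'a::chilbert_space" and N :: "'a set"
  assumes cl: "closed N" and z: "0 \<in> N" and add: "\<And>x y. x \<in> N \<Longrightarrow> y \<in> N \<Longrightarrow> x + y \<in> N"
    and sc: "\<And>c x. x \<in> N \<Longrightarrow> scaleC c x \<in> N"
  shows "\<exists>n0\<in>N. \<forall>n\<in>N. cinner (x0 - n0) n = 0"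
proof -
  define d where "d = infdist x0 N"
  have d0: "d \<ge> 0" by (simp add: d_def infdist_nonneg)
  have dle: "d \<le> norm (x0 - n)" if "n \<in> N" for n
    using infdist_le[OF that, of x0] by (simp add: d_def dist_norm)
  have diff: "x - y \<in> N" if "x \<in> N" "y \<in> N" for x y
  proof -
    have "scaleC (-1) y = - y" by (simp add: scaleC_minus_left scaleC_one)
    then show ?thesis using add[OF that(1) sc[OF that(2), of "-1"]] by simp
  qed
  have "\<exists>n\<in>N. norm (x0 - n) < sqrt (d\<^sup>2 + inverse (real (Suc k)))" for k
  proof -
    have "d < sqrt (d\<^sup>2 + inverse (real (Suc k)))"
      using d0 by (simp add: real_less_rsqrt)
    moreover have ne: "N \<noteq> {}" using z by auto
    ultimately have "(INF a\<in>N. dist x0 a) < sqrt (d\<^sup>2 + inverse (real (Suc k)))"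
      unfolding d_def infdist_notempty[OF ne] by simp
    then show ?thesis unfolding cINF_less_iff[OF ne bdd_below_image_dist] by (auto simp: dist_norm)
  qed
  then obtain s where sN: "\<And>k. s k \<in> N" and sl: "\<And>k. norm (x0 - s k) < sqrt (d\<^sup>2 + inverse (real (Suc k)))"
    by metis
  have sl2: "(norm (x0 - s k))\<^sup>2 < d\<^sup>2 + inverse (real (Suc k))" for k
  proof -
    have "(norm (x0 - s k))\<^sup>2 < (sqrt (d\<^sup>2 + inverse (real (Suc k))))\<^sup>2"
      using sl[of k] by (intro power_strict_mono) auto
    then show ?thesis by simp
  qed
  have cd: "(norm (s k - s m))\<^sup>2 \<le> 2 * inverse (real (Suc k)) + 2 * inverse (real (Suc m))" for k m
  proof -
    define p where "p = x0 - s k"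
    define q where "q = x0 - s m"
    have "p + q = scaleC 2 (x0 - scaleC (1/2) (s k + s m))"
      by (simp add: p_def q_def scaleC_diff_right scaleC_scaleC scaleC_add_left[of 1 1, simplified] scaleC_one algebra_simps)
    then have "norm (p + q) = 2 * norm (x0 - scaleC (1/2) (s k + s m))" by (simp add: norm_scaleC)
    moreover have "d \<le> norm (x0 - scaleC (1/2) (s k + s m))"
      by (intro dle sc add sN)
    ultimately have "2 * d \<le> norm (p + q)" by simp
    then have "(2 * d)\<^sup>2 \<le> (norm (p + q))\<^sup>2" using d0 by (intro power_mono) auto
    moreover have "p - q = s m - s k" by (simp add: p_def q_def)
    moreover note parallelogram[of p q] sl2[of k] sl2[of m]
    ultimately show ?thesis by (simp add: p_def q_def norm_minus_commute power_mult_distrib)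
  qed
  have "Cauchy s"
  proof (rule CauchyI)
    fix e :: real assume e: "e > 0"
    obtain M where M: "inverse (real (Suc M)) < e\<^sup>2 / 4"
      using reals_Archimedean[of "e\<^sup>2/4"] e by auto
    show "\<exists>M. \<forall>m\<ge>M. \<forall>n\<ge>M. norm (s m - s n) < e"
    proof (intro exI allI impI)
      fix m n assume mn: "M \<le> m" "M \<le> n"
      have "inverse (real (Suc m)) \<le> inverse (real (Suc M))" "inverse (real (Suc n)) \<le> inverse (real (Suc M))"
        using mn by (auto simp: field_simps)
      then have "(norm (s m - s n))\<^sup>2 < e\<^sup>2" using cd[of m n] M by linarith
      then show "norm (s m - s n) < e" using e by (simp add: power_less_imp_less_base)
    qed
  qed
  then obtain n0 where lim: "s \<longlonglongrightarrow> n0" using Cauchy_convergent_iff convergent_def by blast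
  have n0N: "n0 \<in> N" using closed_sequentially[OF cl sN lim] .
  have "norm (x0 - n0) \<le> d"
  proof (rule LIMSEQ_le)
    show "(\<lambda>k. norm (x0 - s k)) \<longlonglongrightarrow> norm (x0 - n0)" by (intro tendsto_intros lim)
    show "(\<lambda>k. sqrt (d\<^sup>2 + inverse (real (Suc k)))) \<longlonglongrightarrow> d"
      using tendsto_real_sqrt[OF tendsto_add[OF tendsto_const LIMSEQ_inverse_real_of_nat, of "d\<^sup>2"]] d0 by simp
    show "\<exists>N. \<forall>n\<ge>N. norm (x0 - s n) \<le> sqrt (d\<^sup>2 + inverse (real (Suc n)))"
      using sl less_imp_le by blast
  qed
  then have mini: "norm (x0 - n0) \<le> norm (x0 - n)" if "n \<in> N" for n using dle[OF that] by simp
  define e where "e = x0 - n0"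
  have "cinner e n = 0" if nN: "n \<in> N" for n
  proof (rule ccontr)
    assume ne: "cinner e n \<noteq> 0"
    define c where "c = cinner e n"
    define r where "r = 1 / ((norm n)\<^sup>2 + 1)"
    have np: "(norm n)\<^sup>2 + 1 > 0" by (simp add: add_nonneg_pos)
    have r0: "r > 0" using np by (simp add: r_def)
    have rn: "r * (norm n)\<^sup>2 < 1" using np by (simp add: r_def)
    have "n0 + scaleC (complex_of_real r * c) n \<in> N" by (intro add n0N sc nN)
    from mini[OF this] have "norm e \<le> norm (e - scaleC (complex_of_real r * c) n)"
      by (simp add: e_def algebra_simps)
    then have "(norm e)\<^sup>2 \<le> (norm (e - scaleC (complex_of_real r * c) n))\<^sup>2"
      by (intro power_mono) auto
    also have "\<dots> = (norm e)\<^sup>2 - 2 * r * (cmod c)\<^sup>2 + r\<^sup>2 * (cmod c)\<^sup>2 * (norm n)\<^sup>2"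
      unfolding norm_diff_scaleC_sq
      using r0 by (simp add: c_def[symmetric] complex_norm_square[symmetric] mult.assoc norm_mult power_mult_distrib mult.left_commute[of "cnj c"]) (metis cmod_power2 power2_eq_square)
    finally have "2 * r * (cmod c)\<^sup>2 \<le> r * (cmod c)\<^sup>2 * (r * (norm n)\<^sup>2)"
      by (simp add: power2_eq_square algebra_simps)
    also have "\<dots> < r * (cmod c)\<^sup>2 * 1"
      using rn r0 ne by (intro mult_strict_left_mono) (auto simp: c_def)
    finally show False using r0 ne by (simp add: c_def)
  qed
  then show ?thesis using n0N e_def by blast
qed

lemma riesz:
  fixes f :: "'a::chilbert_space \<Rightarrow> complex"
  assumes bl: "bounded_linear f" and fc: "\<And>c x. f (scaleC c x) = c * f x"
  shows "\<exists>z. \<forall>x. f x = cinner x z"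
proof (cases "\<forall>x. f x = 0")
  case True then show ?thesis by (intro exI[of _ 0]) simp
next
  case False
  then obtain x0 where fx0: "f x0 \<noteq> 0" by auto
  interpret bounded_linear f by (rule bl)
  define N where "N = {x. f x = 0}"
  have cl: "closed N" unfolding N_def
    by (rule closed_Collect_eq) (auto intro: linear_continuous_on bl)
  obtain n0 where n0: "n0 \<in> N" and orth: "\<And>n. n \<in> N \<Longrightarrow> cinner (x0 - n0) n = 0"
    using closest_point_ortho[OF cl, of x0] by (auto simp: N_def add fc zero)
  define e where "e = x0 - n0"
  have fe: "f e = f x0" using n0 by (simp add: e_def diff N_def)
  have ee: "cinner e e \<noteq> 0" using fe fx0 by (auto simp: zero)
  define z where "z = scaleC (cnj (f e) / cnj (cinner e e)) e"
  have "f x = cinner x z" for x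
  proof -
    have "f (scaleC (f x) e - scaleC (f e) x) = 0" by (simp add: diff fc)
    then have "cinner e (scaleC (f x) e - scaleC (f e) x) = 0" using orth by (simp add: N_def e_def)
    then have "cnj (f x) * cinner e e = cnj (f e) * cinner e x"
      by (simp add: cinner_diff_right cinner_scaleC_right)
    then have "f x * cnj (cinner e e) = f e * cinner x e"
      by (metis cinner_commute complex_cnj_cnj complex_cnj_mult)
    then show ?thesis using ee by (simp add: z_def cinner_scaleC_right field_simps)
  qed
  then show ?thesis by blast
qed

lemma bounded_clinearD:
  assumes "bounded_clinear a"
  shows "bounded_linear a" "a (scaleC c x) = scaleC c (a x)"
  using assms by (auto simp: bounded_clinear_def)

lemma adj_works:
  fixes a :: "'a::chilbert_space \<Rightarrow> 'a"
  assumes "bounded_clinear a"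
  shows "cinner (a x) y = cinner x (adj a y)"
proof -
  interpret bounded_linear a using bounded_clinearD[OF assms] by simp
  have "\<exists>z. \<forall>x. cinner (a x) y = cinner x z" for y
  proof (rule riesz)
    show "bounded_linear (\<lambda>x. cinner (a x) y)"
    proof (rule bounded_linear_intro[where K = "onorm a * norm y"])
      show "cinner (a (x + x')) y = cinner (a x) y + cinner (a x') y" for x x'
        by (simp add: add cinner_add_left)
      show "cinner (a (r *\<^sub>R x)) y = r *\<^sub>R cinner (a x) y" for r x
        by (simp add: scaleR_scaleC bounded_clinearD(2)[OF assms] cinner_scaleC_left scaleR_conv_of_real)
      show "norm (cinner (a x) y) \<le> norm x * (onorm a * norm y)" for x
      proof -
        have "norm (cinner (a x) y) \<le> norm (a x) * norm y" by (rule Cauchy_Schwarz)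
        also have "\<dots> \<le> onorm a * norm x * norm y"
          using onorm[OF bounded_linear_axioms] by (intro mult_right_mono) auto
        finally show ?thesis by (simp add: algebra_simps)
      qed
    qed
    show "cinner (a (scaleC c x)) y = c * cinner (a x) y" for c x
      using bounded_clinearD(2)[OF assms] by (simp add: cinner_scaleC_left)
  qed
  then obtain g where g: "\<And>x y. cinner (a x) y = cinner x (g y)" by metis
  have "\<exists>!g. \<forall>x y. cinner (a x) y = cinner x (g y)"
  proof (rule ex1I[of _ g])
    show "\<forall>x y. cinner (a x) y = cinner x (g y)" using g by blast
    fix g' assume h: "\<forall>x y. cinner (a x) y = cinner x (g' y)"
    show "g' = g"
    proof
      fix y
      show "g' y = g y"
        by (rule cinner_ext) (metis cinner_commute g h)
    qed
  qed
  then have "\<forall>x y. cinner (a x) y = cinner x (adj a y)"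
    unfolding adj_def by (rule theI')
  then show ?thesis by blast
qed



instantiation complex :: chilbert_space
begin
definition scaleC_complex :: "complex \<Rightarrow> complex \<Rightarrow> complex" where "scaleC_complex c x = c * x"
definition cinner_complex :: "complex \<Rightarrow> complex \<Rightarrow> complex" where "cinner_complex x y = x * cnj y"
instance
proof
  fix c d :: complex and x y z :: complex and r :: real
  show "scaleC c (x + y) = scaleC c x + scaleC c y" by (simp add: scaleC_complex_def algebra_simps)
  show "scaleC (c + d) x = scaleC c x + scaleC d x" by (simp add: scaleC_complex_def algebra_simps)
  show "scaleC c (scaleC d x) = scaleC (c * d) x" by (simp add: scaleC_complex_def algebra_simps)
  show "scaleC 1 x = x" by (simp add: scaleC_complex_def)
  show "r *\<^sub>R x = scaleC (complex_of_real r) x" by (simp add: scaleC_complex_def scaleR_conv_of_real)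
  show "cinner (x + y) z = cinner x z + cinner y z" by (simp add: cinner_complex_def algebra_simps)
  show "cinner (scaleC c x) y = c * cinner x y" by (simp add: cinner_complex_def scaleC_complex_def algebra_simps)
  show "cinner x y = cnj (cinner y x)" by (simp add: cinner_complex_def)
  show "cinner x x = complex_of_real ((norm x)\<^sup>2)" by (simp add: cinner_complex_def complex_norm_square del: of_real_power)
qed
end

instantiation vec :: (chilbert_space, finite) chilbert_space
begin
definition scaleC_vec :: "complex \<Rightarrow> 'a^'b \<Rightarrow> 'a^'b" where "scaleC_vec c x = (\<chi> i. scaleC c (x$i))"
definition cinner_vec :: "'a^'b \<Rightarrow> 'a^'b \<Rightarrow> complex" where "cinner_vec x y = (\<Sum>i\<in>UNIV. cinner (x$i) (y$i))"
instance
proof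
  fix c d :: complex and x y z :: "'a^'b" and r :: real
  show "scaleC c (x + y) = scaleC c x + scaleC c y" by (simp add: scaleC_vec_def vec_eq_iff scaleC_add_right)
  show "scaleC (c + d) x = scaleC c x + scaleC d x" by (simp add: scaleC_vec_def vec_eq_iff scaleC_add_left)
  show "scaleC c (scaleC d x) = scaleC (c * d) x" by (simp add: scaleC_vec_def vec_eq_iff scaleC_scaleC)
  show "scaleC 1 x = x" by (simp add: scaleC_vec_def vec_eq_iff scaleC_one)
  show "r *\<^sub>R x = scaleC (complex_of_real r) x" by (simp add: scaleC_vec_def vec_eq_iff scaleR_scaleC)
  show "cinner (x + y) z = cinner x z + cinner y z" by (simp add: cinner_vec_def cinner_add_left sum.distrib)
  show "cinner (scaleC c x) y = c * cinner x y" by (simp add: cinner_vec_def scaleC_vec_def cinner_scaleC_left sum_distrib_left)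
  show "cinner x y = cnj (cinner y x)" by (simp add: cinner_vec_def cnj_sum cinner_commute[of "x$i" "y$i" for i])
  have "(norm x)\<^sup>2 = (\<Sum>i\<in>UNIV. (norm (x$i))\<^sup>2)"
    unfolding norm_vec_def L2_set_def by (simp add: sum_nonneg)
  then show "cinner x x = complex_of_real ((norm x)\<^sup>2)"
    by (simp add: cinner_vec_def cinner_self_norm del: of_real_power)
qed
end

lemma scaleC_cvec: "scaleC c (x::complex^'n) = c *s x"
  by (simp add: scaleC_vec_def scaleC_complex_def vec_eq_iff)

lemma cinner_cvec: "cinner (x::complex^'n) y = (\<Sum>i\<in>UNIV. x$i * cnj (y$i))"
  by (simp add: cinner_vec_def cinner_complex_def)

lemma scaleC_vec_nth[simp]: "(scaleC c x) $ i = scaleC c (x$i)"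
  by (simp add: scaleC_vec_def)



definition herm :: "complex^'n^'n \<Rightarrow> bool" where
  "herm M \<longleftrightarrow> (\<forall>i j. M$i$j = cnj (M$j$i))"

definition orthonormal :: "('n \<Rightarrow> 'a::chilbert_space) \<Rightarrow> bool" where
  "orthonormal \<phi> \<longleftrightarrow> (\<forall>m m'. cinner (\<phi> m) (\<phi> m') = (if m = m' then 1 else 0))"

lemma mv_scaleC: "(M::complex^'n^'n) *v (scaleC c x) = scaleC c (M *v x)"
  by (simp add: scaleC_cvec vec_eq_iff matrix_vector_mult_def sum_distrib_left algebra_simps)

lemma mv_add: "(M::complex^'n^'n) *v (x + y) = M *v x + M *v y"
  by (rule matrix_vector_right_distrib)

lemma mv_diff: "(M::complex^'n^'n) *v (x - y) = M *v x - M *v y"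
  by (rule matrix_vector_mult_diff_distrib)

lemma herm_adj:
  assumes "herm (M::complex^'n^'n)"
  shows "cinner (M *v x) y = cinner x (M *v y)"
proof -
  have "cinner (M *v x) y = (\<Sum>i\<in>UNIV. \<Sum>j\<in>UNIV. M$i$j * x$j * cnj (y$i))"
    by (simp add: cinner_cvec matrix_vector_mult_def sum_distrib_right)
  also have "\<dots> = (\<Sum>j\<in>UNIV. \<Sum>i\<in>UNIV. M$i$j * x$j * cnj (y$i))" by (rule sum.swap)
  also have "\<dots> = (\<Sum>j\<in>UNIV. x$j * cnj (\<Sum>i\<in>UNIV. M$j$i * y$i))"
  proof (rule sum.cong[OF refl])
    fix j
    have "x$j * cnj (\<Sum>i\<in>UNIV. M$j$i * y$i) = (\<Sum>i\<in>UNIV. x$j * (cnj (M$j$i) * cnj (y$i)))"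
      by (simp add: cnj_sum sum_distrib_left)
    also have "\<dots> = (\<Sum>i\<in>UNIV. M$i$j * x$j * cnj (y$i))"
      using assms unfolding herm_def by (intro sum.cong refl) (metis mult.commute mult.left_commute)
    finally show "(\<Sum>i\<in>UNIV. M$i$j * x$j * cnj (y$i)) = x$j * cnj (\<Sum>i\<in>UNIV. M$j$i * y$i)" by simp
  qed
  also have "\<dots> = cinner x (M *v y)"
    by (simp add: cinner_cvec matrix_vector_mult_def)
  finally show ?thesis .
qed

lemma bounded_linear_cinner_left: "bounded_linear (\<lambda>x::'a::chilbert_space. cinner x b)"
proof (rule bounded_linear_intro[where K = "norm b"])
  show "cinner (x + y) b = cinner x b + cinner y b" for x y by (rule cinner_add_left)
  show "cinner (r *\<^sub>R x) b = r *\<^sub>R cinner x b" for r x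
    by (simp add: scaleR_scaleC cinner_scaleC_left scaleC_complex_def)
  show "norm (cinner x b) \<le> norm x * norm b" for x by (rule Cauchy_Schwarz)
qed

lemma Re_cinner_scale_real:
  fixes M :: "complex^'n^'n"
  shows "Re (cinner (M *v scaleC (complex_of_real r) x) (scaleC (complex_of_real r) x)) = r\<^sup>2 * Re (cinner (M *v x) x)"
  by (simp add: mv_scaleC cinner_scaleC_left cinner_scaleC_right power2_eq_square)

lemma real_of_self_cnj: "cnj z = z \<Longrightarrow> z = complex_of_real (Re z)"
  by (simp add: complex_eq_iff)

lemma eig_step:
  fixes M :: "complex^'n^'n" and B :: "(complex^'n) set"
  assumes hM: "herm M" and fB: "finite B" and cB: "card B < CARD('n)"
    and onB: "\<And>b b'. b \<in> B \<Longrightarrow> b' \<in> B \<Longrightarrow> cinner b b' = (if b = b' then 1 else 0)"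
    and eB: "\<And>b. b \<in> B \<Longrightarrow> \<exists>l::real. M *v b = scaleC (complex_of_real l) b"
  shows "\<exists>e. e \<notin> B \<and> (\<forall>b\<in>B. cinner e b = 0) \<and> cinner e e = 1 \<and>
            (\<exists>l::real. M *v e = scaleC (complex_of_real l) e)"
proof -
  define W where "W = {x. \<forall>b\<in>B. cinner x b = 0}"
  have projW: "x - (\<Sum>b\<in>B. scaleC (cinner x b) b) \<in> W" for x
  proof -
    have "(\<Sum>b\<in>B. cinner x b * cinner b b') = cinner x b'" if "b' \<in> B" for b'
    proof -
      have "(\<Sum>b\<in>B. cinner x b * cinner b b') = (\<Sum>b\<in>B. if b = b' then cinner x b else 0)"
        by (rule sum.cong) (auto simp: onB that)
      also have "\<dots> = cinner x b'" using that fB by (simp add: sum.delta')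
      finally show ?thesis .
    qed
    then show ?thesis
      by (simp add: W_def cinner_diff_left cinner_sum_left cinner_scaleC_left)
  qed
  have "\<exists>x\<in>W. x \<noteq> 0"
  proof (rule ccontr)
    assume "\<not> (\<exists>x\<in>W. x \<noteq> 0)"
    then have W0: "\<And>x. x \<in> W \<Longrightarrow> x = 0" by auto
    have "x \<in> vec.span B" for x
    proof -
      have "x = (\<Sum>b\<in>B. scaleC (cinner x b) b)" using W0[OF projW[of x]] by simp
      also have "\<dots> \<in> vec.span B"
        by (intro vec.span_sum) (auto simp: scaleC_cvec intro: vec.span_scale vec.span_base)
      finally show ?thesis .
    qed
    then have "vec.dim (UNIV :: (complex^'n) set) \<le> card B"
      by (intro vec.dim_le_card fB) auto
    then show False using cB vec_dim_card[where 'a=complex and 'n='n] by linarith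
  qed
  then obtain x0 where x0W: "x0 \<in> W" and x0: "x0 \<noteq> 0" by blast
  have Wsc: "scaleC c x \<in> W" if "x \<in> W" for c x
    using that by (simp add: W_def cinner_scaleC_left)
  have Wadd: "x + y \<in> W" if "x \<in> W" "y \<in> W" for x y
    using that by (simp add: W_def cinner_add_left)
  have Wdiff: "x - y \<in> W" if "x \<in> W" "y \<in> W" for x y
    using that by (simp add: W_def cinner_diff_left)
  have clW: "closed W"
  proof -
    have "W = (\<Inter>b\<in>B. {x. cinner x b = 0})" by (auto simp: W_def)
    also have "closed \<dots>"
      by (intro closed_INT ballI closed_Collect_eq continuous_on_const linear_continuous_on bounded_linear_cinner_left)
    finally show ?thesis .
  qed
  define K where "K = W \<inter> sphere 0 1"
  have cK: "compact K" unfolding K_def by (intro closed_Int_compact clW compact_sphere)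
  have nK: "scaleC (complex_of_real (1 / norm x0)) x0 \<in> K"
    using x0 x0W by (simp add: K_def Wsc norm_scaleC norm_divide)
  define f where "f x = Re (cinner (M *v x) x)" for x
  have cf: "continuous_on K f"
  proof -
    have cM: "continuous_on UNIV ((*v) M)" by (intro linear_continuous_on matrix_vector_mul_bounded_linear)
    have "continuous_on UNIV (\<lambda>x. Re (\<Sum>i\<in>UNIV. (M *v x)$i * cnj (x$i)))"
      by (intro continuous_intros cM continuous_on_id)
    then show ?thesis unfolding f_def cinner_cvec by (rule continuous_on_subset) auto
  qed
  obtain e where eK: "e \<in> K" and emax: "\<And>y. y \<in> K \<Longrightarrow> f y \<le> f e"
    using continuous_attains_sup[OF cK _ cf] nK by blast
  have eW: "e \<in> W" and ne: "norm e = 1" using eK by (auto simp: K_def)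
  have ee: "cinner e e = 1" using ne by (simp add: cinner_self_norm)
  define lam where "lam = f e"
  have hom: "f x \<le> lam * (norm x)\<^sup>2" if "x \<in> W" for x
  proof (cases "x = 0")
    case True then show ?thesis by (simp add: f_def)
  next
    case False
    have "scaleC (complex_of_real (1 / norm x)) x \<in> K"
      using False that by (simp add: K_def Wsc norm_scaleC norm_divide)
    from emax[OF this] have "(1 / norm x)\<^sup>2 * f x \<le> lam"
      unfolding f_def lam_def Re_cinner_scale_real .
    then show ?thesis using False by (simp add: field_simps)
  qed
  have Mee: "cinner (M *v e) e = complex_of_real lam"
  proof -
    have "cnj (cinner (M *v e) e) = cinner (M *v e) e"
      using herm_adj[OF hM, of e e] by (metis cinner_commute)
    then show ?thesis unfolding lam_def f_def by (rule real_of_self_cnj)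
  qed
  define y where "y = M *v e - scaleC (complex_of_real lam) e"
  have yW: "y \<in> W"
  proof -
    have "M *v e \<in> W"
    proof -
      have "cinner (M *v e) b = 0" if bB: "b \<in> B" for b
      proof -
        obtain l :: real where l: "M *v b = scaleC (complex_of_real l) b" using eB[OF bB] by blast
        have "cinner (M *v e) b = cinner e (M *v b)" by (rule herm_adj[OF hM])
        also have "\<dots> = 0" using eW bB by (simp add: l cinner_scaleC_right W_def)
        finally show ?thesis .
      qed
      then show ?thesis by (simp add: W_def)
    qed
    then show ?thesis unfolding y_def by (intro Wdiff Wsc eW)
  qed
  have ye: "cinner y e = 0" by (simp add: y_def cinner_diff_left cinner_scaleC_left Mee ee)
  have ey: "cinner e y = 0" using ye by (metis cinner_commute complex_cnj_zero)
  have Mey: "cinner (M *v e) y = cinner y y"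
  proof -
    have "M *v e = y + scaleC (complex_of_real lam) e" by (simp add: y_def)
    then show ?thesis by (simp add: cinner_add_left cinner_scaleC_left ey)
  qed
  have Mye: "cinner (M *v y) e = cinner y y"
    using herm_adj[OF hM, of y e] Mey by (metis cinner_commute cnj_cinner_self)
  have "y = 0"
  proof (rule ccontr)
    assume yne: "y \<noteq> 0"
    define Y where "Y = (norm y)\<^sup>2"
    define R where "R = Re (cinner (M *v y) y)"
    have Y0: "Y > 0" using yne by (simp add: Y_def)
    have key: "2 * Y \<le> t * (lam * Y - R)" if t0: "t > 0" for t
    proof -
      define x where "x = e + scaleC (complex_of_real t) y"
      have xW: "x \<in> W" unfolding x_def by (intro Wadd Wsc eW yW)
      have fx: "f x = lam + 2 * t * Y + t\<^sup>2 * R"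
      proof -
        have "cinner (M *v x) x = cinner (M *v e) e + complex_of_real t * cinner (M *v e) y
            + complex_of_real t * cinner (M *v y) e + complex_of_real t * complex_of_real t * cinner (M *v y) y"
          by (simp add: x_def mv_add mv_scaleC cinner_add_left cinner_add_right cinner_scaleC_left cinner_scaleC_right algebra_simps)
        then show ?thesis
          by (simp add: f_def Mee Mey Mye R_def Y_def cinner_self_norm power2_eq_square del: of_real_power)
      qed
      have nx: "(norm x)\<^sup>2 = 1 + t\<^sup>2 * Y"
      proof -
        have "cinner x x = cinner e e + complex_of_real t * cinner e y + complex_of_real t * cinner y e
            + complex_of_real t * complex_of_real t * cinner y y"
          by (simp add: x_def cinner_add_left cinner_add_right cinner_scaleC_left cinner_scaleC_right algebra_simps)
        then have "Re (cinner x x) = 1 + t\<^sup>2 * Y"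
          by (simp add: ne ey ye Y_def cinner_self_norm power2_eq_square del: of_real_power)
        then show ?thesis by (simp add: cinner_self_Re)
      qed
      from hom[OF xW] fx nx have "lam + 2 * t * Y + t\<^sup>2 * R \<le> lam * (1 + t\<^sup>2 * Y)" by simp
      then have "t * (2 * Y) \<le> t * (t * (lam * Y - R))" by (simp add: algebra_simps power2_eq_square)
      then show ?thesis using t0 by simp
    qed
    define C where "C = \<bar>lam * Y - R\<bar> + 1"
    have C0: "C > 0" by (simp add: C_def add_nonneg_pos)
    define t where "t = Y / C"
    have t0: "t > 0" using Y0 C0 by (simp add: t_def)
    have "t * (lam * Y - R) \<le> t * \<bar>lam * Y - R\<bar>" using t0 by (intro mult_left_mono) auto
    also have "\<dots> < t * C" using t0 by (simp add: C_def)
    also have "\<dots> = Y" using C0 by (simp add: t_def)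
    finally have "2 * Y < Y" using key[OF t0] by linarith
    then show False using Y0 by simp
  qed
  then have eig: "M *v e = scaleC (complex_of_real lam) e" by (simp add: y_def)
  have "e \<notin> B"
  proof
    assume "e \<in> B"
    then have "cinner e e = 0" using eW by (simp add: W_def)
    then show False using ee by simp
  qed
  moreover have "\<forall>b\<in>B. cinner e b = 0" using eW by (simp add: W_def)
  ultimately show ?thesis using ee eig by blast
qed



lemma ex_eig_set:
  fixes M :: "complex^'n^'n"
  assumes hM: "herm M"
  shows "k \<le> CARD('n) \<Longrightarrow> \<exists>B. finite B \<and> card B = k \<and>
     (\<forall>b\<in>B. \<forall>b'\<in>B. cinner b b' = (if b = b' then 1 else 0)) \<and>
     (\<forall>b\<in>B. \<exists>l::real. M *v b = scaleC (complex_of_real l) b)"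
proof (induction k)
  case 0
  show ?case by (intro exI[of _ "{}"]) simp
next
  case (Suc k)
  then obtain B where fB: "finite B" and cB: "card B = k"
    and onB: "\<forall>b\<in>B. \<forall>b'\<in>B. cinner b b' = (if b = b' then 1 else 0)"
    and eB: "\<forall>b\<in>B. \<exists>l::real. M *v b = scaleC (complex_of_real l) b" by auto
  obtain e where eB': "e \<notin> B" and eo: "\<forall>b\<in>B. cinner e b = 0" and ee: "cinner e e = 1"
    and el: "\<exists>l::real. M *v e = scaleC (complex_of_real l) e"
    using eig_step[OF hM fB _ _ ] onB eB cB Suc.prems by (metis Suc_le_lessD)
  have oe: "\<forall>b\<in>B. cinner b e = 0" using eo by (metis cinner_commute complex_cnj_zero)
  show ?case
    by (intro exI[of _ "insert e B"]) (use fB cB eB' onB eB eo oe ee el in \<open>auto\<close>)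
qed

lemma spectral:
  fixes M :: "complex^'n^'n"
  assumes hM: "herm M"
  shows "\<exists>(\<phi>::'n \<Rightarrow> complex^'n) (\<mu>::'n \<Rightarrow> real). orthonormal \<phi> \<and> (\<forall>m. M *v \<phi> m = scaleC (complex_of_real (\<mu> m)) (\<phi> m))"
proof -
  obtain B where fB: "finite B" and cB: "card B = CARD('n)"
    and onB: "\<forall>b\<in>B. \<forall>b'\<in>B. cinner b b' = (if b = b' then 1 else 0)"
    and eB: "\<forall>b\<in>B. \<exists>l::real. M *v b = scaleC (complex_of_real l) b"
    using ex_eig_set[OF hM order_refl] by blast
  obtain h where h: "bij_betw h (UNIV::'n set) B"
    using finite_same_card_bij[of "UNIV::'n set" B] fB cB by auto
  have hB: "h m \<in> B" for m using h by (auto simp: bij_betw_def)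
  have hinj: "h m = h m' \<Longrightarrow> m = m'" for m m' using h by (auto simp: bij_betw_def inj_on_def)
  have "orthonormal h" unfolding orthonormal_def using onB hB hinj by auto
  moreover have "\<forall>m. \<exists>l::real. M *v h m = scaleC (complex_of_real l) (h m)" using eB hB by blast
  then obtain \<mu> where "\<forall>m. M *v h m = scaleC (complex_of_real (\<mu> m)) (h m)" by metis
  ultimately show ?thesis by (intro exI[of _ h] exI[of _ \<mu>] conjI) auto
qed

lemma orthonormal_complete:
  fixes \<phi> :: "'n \<Rightarrow> complex^'n"
  assumes "orthonormal \<phi>"
  shows "(\<Sum>m\<in>UNIV. \<phi> m $ i * cnj (\<phi> m $ j)) = (if i = j then 1 else 0)"
proof -
  define U :: "complex^'n^'n" where "U = (\<chi> i m. \<phi> m $ i)"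
  define V :: "complex^'n^'n" where "V = (\<chi> m i. cnj (\<phi> m $ i))"
  have "V ** U = mat 1"
  proof -
    have "(V ** U) $ m $ m' = mat 1 $ m $ m'" for m m'
    proof -
      have "(V ** U) $ m $ m' = cinner (\<phi> m') (\<phi> m)"
        by (simp add: U_def V_def matrix_matrix_mult_def cinner_cvec mult.commute)
      then show ?thesis using assms by (simp add: orthonormal_def mat_def)
    qed
    then show ?thesis by (simp add: vec_eq_iff)
  qed
  then have "U ** V = mat 1" using matrix_left_right_inverse by blast
  then have "(U ** V) $ i $ j = mat 1 $ i $ j" by simp
  then show ?thesis by (simp add: U_def V_def matrix_matrix_mult_def mat_def)
qed

lemma cvec_sum_nth: "(sum f A :: complex^'n) $ i = (\<Sum>a\<in>A. f a $ i)"
  by simp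

lemma orthonormal_expand:
  fixes \<phi> :: "'n \<Rightarrow> complex^'n"
  assumes "orthonormal \<phi>"
  shows "x = (\<Sum>m\<in>UNIV. scaleC (cinner x (\<phi> m)) (\<phi> m))"
proof -
  have "x $ i = (\<Sum>m\<in>UNIV. scaleC (cinner x (\<phi> m)) (\<phi> m)) $ i" for i
  proof -
    have "(\<Sum>m\<in>UNIV. scaleC (cinner x (\<phi> m)) (\<phi> m)) $ i
        = (\<Sum>m\<in>UNIV. \<Sum>j\<in>UNIV. x$j * (\<phi> m $ i * cnj (\<phi> m $ j)))"
      unfolding cinner_cvec scaleC_cvec by (auto simp: sum_distrib_left algebra_simps intro!: sum.cong)
    also have "\<dots> = (\<Sum>j\<in>UNIV. x$j * (\<Sum>m\<in>UNIV. \<phi> m $ i * cnj (\<phi> m $ j)))"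
      by (subst sum.swap) (simp add: sum_distrib_left)
    also have "\<dots> = (\<Sum>j\<in>UNIV. if j = i then x $ i else 0)"
      by (intro sum.cong refl) (simp add: orthonormal_complete[OF assms])
    also have "\<dots> = x $ i" by (simp add: sum.delta)
    finally show ?thesis by simp
  qed
  then show ?thesis by (simp add: vec_eq_iff)
qed

lemma mv_sum: "(M::complex^'n^'n) *v (\<Sum>a\<in>A. f a) = (\<Sum>a\<in>A. M *v f a)"
  by (induction A rule: infinite_finite_induct) (auto simp: mv_add)

lemma orthonormal_coeff:
  fixes \<phi> :: "'n::finite \<Rightarrow> 'a::chilbert_space"
  assumes "orthonormal \<phi>"
  shows "cinner (\<Sum>m\<in>UNIV. scaleC (d m) (\<phi> m)) (\<phi> k) = d k"
proof -
  have "cinner (\<Sum>m\<in>UNIV. scaleC (d m) (\<phi> m)) (\<phi> k) = (\<Sum>m\<in>UNIV. d m * (if m = k then 1 else 0))"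
    using assms by (simp add: cinner_sum_left cinner_scaleC_left orthonormal_def)
  also have "\<dots> = (\<Sum>m\<in>UNIV. if m = k then d k else 0)" by (intro sum.cong) auto
  also have "\<dots> = d k" by (simp add: sum.delta)
  finally show ?thesis .
qed

definition rk1 :: "('n \<Rightarrow> complex) \<Rightarrow> ('n \<Rightarrow> complex^'n) \<Rightarrow> complex^'n^'n" where
  "rk1 c \<phi> = (\<chi> i j. \<Sum>m\<in>UNIV. c m * \<phi> m $ i * cnj (\<phi> m $ j))"

lemma rk1_mv: "rk1 c \<phi> *v x = (\<Sum>m\<in>UNIV. scaleC (c m * cinner x (\<phi> m)) (\<phi> m))"
proof -
  have "(rk1 c \<phi> *v x) $ i = (\<Sum>m\<in>UNIV. scaleC (c m * cinner x (\<phi> m)) (\<phi> m)) $ i" for i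
  proof -
    have "(rk1 c \<phi> *v x) $ i = (\<Sum>j\<in>UNIV. \<Sum>m\<in>UNIV. c m * \<phi> m $ i * cnj (\<phi> m $ j) * x $ j)"
      by (simp add: rk1_def matrix_vector_mult_def sum_distrib_right)
    also have "\<dots> = (\<Sum>m\<in>UNIV. \<Sum>j\<in>UNIV. c m * \<phi> m $ i * cnj (\<phi> m $ j) * x $ j)"
      by (rule sum.swap)
    also have "\<dots> = (\<Sum>m\<in>UNIV. scaleC (c m * cinner x (\<phi> m)) (\<phi> m)) $ i"
      by (simp add: scaleC_cvec cinner_cvec sum_distrib_left sum_distrib_right algebra_simps)
    finally show ?thesis .
  qed
  then show ?thesis by (simp add: vec_eq_iff)
qed

lemma quad_form: "(\<Sum>i\<in>UNIV. \<Sum>j\<in>UNIV. cnj (v$i) * M$i$j * v$j) = cinner ((M::complex^'n^'n) *v v) v"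
  by (simp add: cinner_cvec matrix_vector_mult_def sum_distrib_right sum_distrib_left algebra_simps)

lemma psd_matD:
  assumes "psd_mat S"
  shows "herm S" "0 \<le> Re (cinner (S *v v) v)"
proof -
  show "herm S" using assms unfolding psd_mat_def herm_def by blast
  have "0 \<le> Re (\<Sum>i\<in>UNIV. \<Sum>j\<in>UNIV. cnj (v$i) * S$i$j * v$j)" using assms unfolding psd_mat_def by blast
  then show "0 \<le> Re (cinner (S *v v) v)" unfolding quad_form .
qed

lemma msqrt_eig:
  fixes M :: "complex^'n^'n" and \<phi> :: "'n \<Rightarrow> complex^'n"
  assumes on: "orthonormal \<phi>" and mu0: "\<And>m. \<mu> m \<ge> 0"
    and eig: "\<And>m. M *v \<phi> m = scaleC (complex_of_real (\<mu> m)) (\<phi> m)"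
  shows "msqrt M = rk1 (\<lambda>m. complex_of_real (sqrt (\<mu> m))) \<phi>"
    and "Re (mtrace (msqrt M)) = (\<Sum>m\<in>UNIV. sqrt (\<mu> m))"
proof -
  define S0 where "S0 = rk1 (\<lambda>m. complex_of_real (sqrt (\<mu> m))) \<phi>"
  have Mx: "M *v x = (\<Sum>m\<in>UNIV. scaleC (complex_of_real (\<mu> m) * cinner x (\<phi> m)) (\<phi> m))" for x
  proof -
    have "M *v x = M *v (\<Sum>m\<in>UNIV. scaleC (cinner x (\<phi> m)) (\<phi> m))"
      using orthonormal_expand[OF on, of x] by simp
    also have "\<dots> = (\<Sum>m\<in>UNIV. scaleC (complex_of_real (\<mu> m) * cinner x (\<phi> m)) (\<phi> m))"
      by (simp add: mv_sum mv_scaleC eig scaleC_scaleC mult.commute)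
    finally show ?thesis .
  qed
  have S0x: "S0 *v x = (\<Sum>m\<in>UNIV. scaleC (complex_of_real (sqrt (\<mu> m)) * cinner x (\<phi> m)) (\<phi> m))" for x
    by (simp add: S0_def rk1_mv)
  have psd: "psd_mat S0"
    unfolding psd_mat_def quad_form
  proof (intro conjI allI)
    fix i j show "S0 $ i $ j = cnj (S0 $ j $ i)"
      by (simp add: S0_def rk1_def cnj_sum mult.commute mult.left_commute)
  next
    fix v
    have "cinner (S0 *v v) v = (\<Sum>m\<in>UNIV. complex_of_real (sqrt (\<mu> m)) * cinner v (\<phi> m) * cinner (\<phi> m) v)"
      by (simp add: S0x cinner_sum_left cinner_scaleC_left)
    also have "\<dots> = (\<Sum>m\<in>UNIV. complex_of_real (sqrt (\<mu> m) * (cmod (cinner v (\<phi> m)))\<^sup>2))"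
      by (intro sum.cong refl) (simp add: cinner_commute[of "\<phi> _" v] mult_cnj_sq mult.assoc)
    finally show "0 \<le> Re (cinner (S0 *v v) v)"
      using mu0 by (simp add: sum_nonneg del: of_real_power)
  qed
  have coef: "cinner (S0 *v x) (\<phi> k) = complex_of_real (sqrt (\<mu> k)) * cinner x (\<phi> k)" for x k
    unfolding S0x by (rule orthonormal_coeff[OF on])
  have sq: "S0 ** S0 = M"
  proof -
    have "(S0 ** S0) *v x = M *v x" for x
    proof -
      have "(S0 ** S0) *v x = S0 *v (S0 *v x)" by (simp add: matrix_vector_mul_assoc)
      also have "\<dots> = M *v x"
        unfolding S0x[of "S0 *v x"] Mx coef
        using mu0 by (intro sum.cong refl) (simp add: mu0 mult.assoc[symmetric] of_real_mult[symmetric] del: of_real_mult)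
      finally show ?thesis .
    qed
    then show ?thesis by (simp add: matrix_eq)
  qed
  have uniq: "S = S0" if psdS: "psd_mat S" and SS: "S ** S = M" for S
  proof -
    have hS: "herm S" using psd_matD[OF psdS] by simp
    have Sphi: "S *v \<phi> m = scaleC (complex_of_real (sqrt (\<mu> m))) (\<phi> m)" for m
    proof -
      define s where "s = sqrt (\<mu> m)"
      have s0: "s \<ge> 0" using mu0[of m] by (simp add: s_def)
      have ss: "s * s = \<mu> m" using mu0[of m] by (simp add: s_def)
      define y where "y = S *v \<phi> m - scaleC (complex_of_real s) (\<phi> m)"
      have SSphi: "S *v (S *v \<phi> m) = scaleC (complex_of_real (\<mu> m)) (\<phi> m)"
        using eig[of m] SS by (simp add: matrix_vector_mul_assoc)
      have Sy: "S *v y = scaleC (complex_of_real (- s)) y"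
        by (simp add: y_def mv_diff mv_scaleC SSphi scaleC_diff_right scaleC_scaleC ss[symmetric]
            scaleC_minus_left algebra_simps)
      have "Re (cinner (S *v y) y) = - s * (norm y)\<^sup>2"
        by (simp add: Sy cinner_scaleC_left cinner_self_norm del: of_real_power)
      moreover have "0 \<le> Re (cinner (S *v y) y)" by (rule psd_matD(2)[OF psdS])
      ultimately have "s * (norm y)\<^sup>2 \<le> 0" by simp
      then have "y = 0"
      proof (cases "s = 0")
        case True
        then have Sy0: "S *v y = 0" by (simp add: Sy)
        have yS: "y = S *v \<phi> m" using True by (simp add: y_def)
        have "cinner y y = cinner (\<phi> m) (S *v y)" using herm_adj[OF hS, of "\<phi> m" y] yS by simp
        then show ?thesis using Sy0 by simp
      next
        case False
        then have "s > 0" using s0 by simp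
        then have "(norm y)\<^sup>2 \<le> 0" using \<open>s * (norm y)\<^sup>2 \<le> 0\<close>
          by (simp add: mult_le_0_iff)
        then show ?thesis by simp
      qed
      then show ?thesis by (simp add: y_def s_def)
    qed
    have "S *v x = S0 *v x" for x
    proof -
      have "S *v x = S *v (\<Sum>m\<in>UNIV. scaleC (cinner x (\<phi> m)) (\<phi> m))"
        using orthonormal_expand[OF on, of x] by simp
      also have "\<dots> = S0 *v x"
        by (simp add: S0x mv_sum mv_scaleC Sphi scaleC_scaleC mult.commute)
      finally show ?thesis .
    qed
    then show ?thesis by (simp add: matrix_eq)
  qed
  have "msqrt M = S0"
    unfolding msqrt_def
  proof (rule the_equality)
    show "psd_mat S0 \<and> S0 ** S0 = M" using psd sq by blast
    show "\<And>S. psd_mat S \<and> S ** S = M \<Longrightarrow> S = S0" using uniq by blast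
  qed
  then show "msqrt M = rk1 (\<lambda>m. complex_of_real (sqrt (\<mu> m))) \<phi>" by (simp add: S0_def)
  have "mtrace S0 = (\<Sum>m\<in>UNIV. complex_of_real (sqrt (\<mu> m)) * cinner (\<phi> m) (\<phi> m))"
    by (simp add: mtrace_def S0_def rk1_def cinner_cvec sum_distrib_left mult.assoc) (rule sum.swap)
  also have "\<dots> = (\<Sum>m\<in>UNIV. complex_of_real (sqrt (\<mu> m)))"
    using on by (simp add: orthonormal_def)
  finally show "Re (mtrace (msqrt M)) = (\<Sum>m\<in>UNIV. sqrt (\<mu> m))"
    using \<open>msqrt M = S0\<close> by simp
qed



definition gram :: "('n::finite \<Rightarrow> 'a::chilbert_space) \<Rightarrow> complex^'n^'n" where
  "gram u = (\<chi> i j. cinner (u i) (u j))"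

definition onJ :: "'n set \<Rightarrow> ('n \<Rightarrow> 'a::chilbert_space) \<Rightarrow> bool" where
  "onJ J f \<longleftrightarrow> (\<forall>n n'. cinner (f n) (f n') = (if n = n' \<and> n \<in> J then 1 else 0))"

lemma gram_herm: "herm (gram u)"
  unfolding herm_def gram_def by (simp add: cinner_commute[symmetric])

lemma S1_gram: "S1_norm_vec u = Re (mtrace (msqrt (gram u)))"
  by (simp add: S1_norm_vec_def gram_def)

lemma gram_mv: "(gram u *v c) $ i = cinner (u i) (\<Sum>j\<in>UNIV. scaleC (cnj (c $ j)) (u j))"
  by (simp add: gram_def matrix_vector_mult_def cinner_sum_right cinner_scaleC_right mult.commute)

lemma cinner_sums:
  fixes p :: "'n::finite \<Rightarrow> 'a::chilbert_space"
  shows "cinner (\<Sum>a\<in>UNIV. scaleC (c a) (p a)) (\<Sum>b\<in>UNIV. scaleC (d b) (q b))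
       = (\<Sum>a\<in>UNIV. \<Sum>b\<in>UNIV. c a * cnj (d b) * cinner (p a) (q b))"
  by (simp add: cinner_sum_left cinner_sum_right cinner_scaleC_left cinner_scaleC_right
      sum_distrib_left mult.assoc mult.left_commute) (rule sum.swap)

lemma trace_from_decomp:
  fixes u p :: "'n::finite \<Rightarrow> 'a::chilbert_space" and \<psi> :: "'n \<Rightarrow> complex^'n"
  assumes on: "orthonormal \<psi>"
    and pp: "\<And>n n'. cinner (p n) (p n') = (if n = n' then complex_of_real (\<nu> n) else 0)"
    and u: "\<And>k. u k = (\<Sum>n\<in>UNIV. scaleC (\<psi> n $ k) (p n))"
  shows "S1_norm_vec u = (\<Sum>n\<in>UNIV. sqrt (\<nu> n))" and "\<And>n. \<nu> n \<ge> 0"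
proof -
  show nu0: "\<nu> n \<ge> 0" for n
  proof -
    have "complex_of_real (\<nu> n) = complex_of_real ((norm (p n))\<^sup>2)" using pp[of n n] by (simp add: cinner_self_norm)
    then show ?thesis by (metis of_real_eq_iff zero_le_power2)
  qed
  have G: "gram u = rk1 (\<lambda>a. complex_of_real (\<nu> a)) \<psi>"
  proof -
    have "gram u $ i $ j = rk1 (\<lambda>a. complex_of_real (\<nu> a)) \<psi> $ i $ j" for i j
    proof -
      have "gram u $ i $ j = (\<Sum>a\<in>UNIV. \<Sum>b\<in>UNIV. \<psi> a $ i * cnj (\<psi> b $ j) * cinner (p a) (p b))"
        by (simp add: gram_def u cinner_sums)
      also have "\<dots> = (\<Sum>a\<in>UNIV. \<Sum>b\<in>UNIV. if b = a then \<psi> a $ i * cnj (\<psi> a $ j) * complex_of_real (\<nu> a) else 0)"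
        by (intro sum.cong refl) (auto simp: pp)
      also have "\<dots> = rk1 (\<lambda>a. complex_of_real (\<nu> a)) \<psi> $ i $ j"
        by (simp add: rk1_def sum.delta mult.commute mult.left_commute)
      finally show ?thesis .
    qed
    then show ?thesis by (simp add: vec_eq_iff)
  qed
  have eig: "gram u *v \<psi> n = scaleC (complex_of_real (\<nu> n)) (\<psi> n)" for n
  proof -
    have "gram u *v \<psi> n = (\<Sum>a\<in>UNIV. scaleC (complex_of_real (\<nu> a) * cinner (\<psi> n) (\<psi> a)) (\<psi> a))"
      by (simp add: G rk1_mv)
    also have "\<dots> = (\<Sum>a\<in>UNIV. if a = n then scaleC (complex_of_real (\<nu> n)) (\<psi> n) else 0)"
      using on by (intro sum.cong refl) (auto simp: orthonormal_def)
    also have "\<dots> = scaleC (complex_of_real (\<nu> n)) (\<psi> n)" by (simp add: sum.delta)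
    finally show ?thesis .
  qed
  show "S1_norm_vec u = (\<Sum>n\<in>UNIV. sqrt (\<nu> n))"
    unfolding S1_gram using msqrt_eig(2)[OF on nu0 eig] .
qed

lemma gram_spectral:
  fixes u :: "'n::finite \<Rightarrow> 'a::chilbert_space"
  shows "\<exists>(\<psi>::'n \<Rightarrow> complex^'n) (\<nu>::'n \<Rightarrow> real) (p::'n \<Rightarrow> 'a). orthonormal \<psi> \<and> (\<forall>n. \<nu> n \<ge> 0) \<and>
    (\<forall>n n'. cinner (p n) (p n') = (if n = n' then complex_of_real (\<nu> n) else 0)) \<and>
    (\<forall>k. u k = (\<Sum>n\<in>UNIV. scaleC (\<psi> n $ k) (p n))) \<and>
    (\<forall>n. gram u *v \<psi> n = scaleC (complex_of_real (\<nu> n)) (\<psi> n)) \<and>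
    S1_norm_vec u = (\<Sum>n\<in>UNIV. sqrt (\<nu> n))"
proof -
  obtain \<psi> :: "'n \<Rightarrow> complex^'n" and \<nu> where on: "orthonormal \<psi>"
    and eig: "\<And>n. gram u *v \<psi> n = scaleC (complex_of_real (\<nu> n)) (\<psi> n)"
    using spectral[OF gram_herm[of u]] by blast
  define p where "p n = (\<Sum>k\<in>UNIV. scaleC (cnj (\<psi> n $ k)) (u k))" for n
  have pp: "cinner (p n) (p n') = (if n = n' then complex_of_real (\<nu> n) else 0)" for n n'
  proof -
    have "cinner (p n) (p n') = (\<Sum>k\<in>UNIV. cnj (\<psi> n $ k) * cinner (u k) (p n'))"
      by (simp add: p_def cinner_sum_left cinner_scaleC_left)
    also have "\<dots> = (\<Sum>k\<in>UNIV. cnj (\<psi> n $ k) * (gram u *v \<psi> n') $ k)"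
      by (simp add: gram_mv p_def)
    also have "\<dots> = complex_of_real (\<nu> n') * cinner (\<psi> n') (\<psi> n)"
      by (simp add: eig scaleC_cvec cinner_cvec sum_distrib_left mult.commute mult.left_commute)
    also have "\<dots> = (if n = n' then complex_of_real (\<nu> n) else 0)"
      using on by (auto simp: orthonormal_def)
    finally show ?thesis .
  qed
  have u: "u k = (\<Sum>n\<in>UNIV. scaleC (\<psi> n $ k) (p n))" for k
  proof -
    have "(\<Sum>n\<in>UNIV. scaleC (\<psi> n $ k) (p n)) = (\<Sum>n\<in>UNIV. \<Sum>k'\<in>UNIV. scaleC (\<psi> n $ k * cnj (\<psi> n $ k')) (u k'))"
      by (simp add: p_def scaleC_sum_right scaleC_scaleC)
    also have "\<dots> = (\<Sum>k'\<in>UNIV. scaleC (\<Sum>n\<in>UNIV. \<psi> n $ k * cnj (\<psi> n $ k')) (u k'))"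
      by (subst sum.swap) (simp add: scaleC_sum_left)
    also have "\<dots> = (\<Sum>k'\<in>UNIV. if k' = k then u k else 0)"
      by (intro sum.cong refl) (simp add: orthonormal_complete[OF on] scaleC_one)
    also have "\<dots> = u k" by (simp add: sum.delta)
    finally show ?thesis by simp
  qed
  from trace_from_decomp[OF on pp u] show ?thesis
    using on pp u eig by blast
qed

lemma norm_sq_onJ:
  fixes f :: "'n::finite \<Rightarrow> 'a::chilbert_space"
  assumes "onJ J f"
  shows "(norm (\<Sum>n\<in>UNIV. scaleC (c n) (f n)))\<^sup>2 = (\<Sum>n\<in>J. (cmod (c n))\<^sup>2)"
proof -
  have "cinner (\<Sum>n\<in>UNIV. scaleC (c n) (f n)) (\<Sum>n\<in>UNIV. scaleC (c n) (f n))
      = (\<Sum>a\<in>UNIV. \<Sum>b\<in>UNIV. if b = a then (if a \<in> J then complex_of_real ((cmod (c a))\<^sup>2) else 0) else 0)"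
    unfolding cinner_sums using assms
    by (intro sum.cong refl) (auto simp: onJ_def mult_cnj_sq)
  also have "\<dots> = (\<Sum>a\<in>UNIV. if a \<in> J then complex_of_real ((cmod (c a))\<^sup>2) else 0)"
    by (simp add: sum.delta)
  also have "\<dots> = complex_of_real (\<Sum>a\<in>J. (cmod (c a))\<^sup>2)"
    by (simp add: sum.If_cases del: of_real_power)
  finally have "complex_of_real ((norm (\<Sum>n\<in>UNIV. scaleC (c n) (f n)))\<^sup>2) = complex_of_real (\<Sum>a\<in>J. (cmod (c a))\<^sup>2)"
    by (simp only: cinner_self_norm)
  then show ?thesis by (simp only: of_real_eq_iff)
qed

lemma onJ_zero: "onJ J f \<Longrightarrow> n \<notin> J \<Longrightarrow> f n = 0"
  using cinner_self_eq_0 unfolding onJ_def by metis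

lemma bessel:
  fixes e :: "'n::finite \<Rightarrow> 'a::chilbert_space"
  assumes oe: "onJ J e"
  shows "(\<Sum>n\<in>J. (cmod (cinner y (e n)))\<^sup>2) \<le> (norm y)\<^sup>2"
proof -
  define P where "P = (\<Sum>n\<in>UNIV. scaleC (cinner y (e n)) (e n))"
  define s where "s = (\<Sum>n\<in>J. (cmod (cinner y (e n)))\<^sup>2)"
  have nP: "(norm P)\<^sup>2 = s" unfolding P_def s_def by (rule norm_sq_onJ[OF oe])
  have "cinner P y = (\<Sum>n\<in>UNIV. cinner y (e n) * cinner (e n) y)"
    by (simp add: P_def cinner_sum_left cinner_scaleC_left)
  also have "\<dots> = (\<Sum>n\<in>UNIV. if n \<in> J then complex_of_real ((cmod (cinner y (e n)))\<^sup>2) else 0)"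
    by (intro sum.cong refl) (auto simp: onJ_zero[OF oe] cinner_commute[of "e _" y] mult_cnj_sq)
  also have "\<dots> = complex_of_real s"
    by (simp add: s_def sum.If_cases del: of_real_power)
  finally have Py: "cinner P y = complex_of_real s" .
  have "0 \<le> (norm (y - P))\<^sup>2" by simp
  also have "(norm (y - P))\<^sup>2 = Re (cinner y y) - Re (cinner y P) - Re (cinner P y) + Re (cinner P P)"
    by (simp add: cinner_self_Re[symmetric] cinner_diff_left cinner_diff_right)
  also have "\<dots> = (norm y)\<^sup>2 - s"
    using Py nP by (simp add: cinner_self_Re cinner_commute[of y P])
  finally show ?thesis by (simp add: s_def)
qed

lemma partial_iso:
  fixes e f :: "'n::finite \<Rightarrow> 'a::chilbert_space"
  assumes oe: "onJ J e" and of: "onJ J f"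
  defines "x \<equiv> (\<lambda>y. \<Sum>n\<in>UNIV. scaleC (cinner y (e n)) (f n))"
  shows "bounded_clinear x" "onorm x \<le> 1" "\<And>n. n \<in> J \<Longrightarrow> x (e n) = f n"
proof -
  have nx: "norm (x y) \<le> norm y" for y
  proof -
    have "(norm (x y))\<^sup>2 \<le> (norm y)\<^sup>2"
      unfolding x_def norm_sq_onJ[OF of] by (rule bessel[OF oe])
    then show ?thesis by (simp add: power2_le_iff_abs_le)
  qed
  have xsc: "x (scaleC c y) = scaleC c (x y)" for c y
    by (simp add: x_def cinner_scaleC_left scaleC_sum_right scaleC_scaleC)
  have bl: "bounded_linear x"
  proof (rule bounded_linear_intro[where K = 1])
    show "x (y + y') = x y + x y'" for y y'
      by (simp add: x_def cinner_add_left scaleC_add_left sum.distrib)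
    show "x (r *\<^sub>R y) = r *\<^sub>R x y" for r y by (simp add: scaleR_scaleC xsc)
    show "norm (x y) \<le> norm y * 1" for y using nx by simp
  qed
  show "bounded_clinear x" using bl xsc by (simp add: bounded_clinear_def)
  show "onorm x \<le> 1" by (rule onorm_bound) (use nx in auto)
  show "x (e n) = f n" if "n \<in> J" for n
  proof -
    have "x (e n) = (\<Sum>m\<in>UNIV. if m = n then f n else 0)"
      unfolding x_def using oe that by (intro sum.cong refl) (auto simp: onJ_def onJ_zero[OF of] scaleC_one)
    then show ?thesis by (simp add: sum.delta)
  qed
qed



lemma clinear_sum:
  assumes "bounded_clinear x"
  shows "x (\<Sum>m\<in>A. scaleC (c m) (v m)) = (\<Sum>m\<in>A. scaleC (c m) (x (v m)))"
proof -
  interpret bounded_linear x using bounded_clinearD(1)[OF assms] .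
  show ?thesis
    by (induction A rule: infinite_finite_induct) (auto simp: add zero bounded_clinearD(2)[OF assms])
qed

lemma norm_vec_sq: "(norm (x::'a::real_normed_vector^'n))\<^sup>2 = (\<Sum>i\<in>UNIV. (norm (x$i))\<^sup>2)"
  unfolding norm_vec_def L2_set_def by (simp add: sum_nonneg)

lemma duality:
  fixes g z :: "'n::finite \<Rightarrow> 'a::chilbert_space"
  assumes og: "onJ I g" and z0: "\<And>m. m \<notin> I \<Longrightarrow> z m = 0"
  shows "\<And>x. bounded_clinear x \<Longrightarrow> cmod (\<Sum>m\<in>UNIV. cinner (x (g m)) (z m)) \<le> onorm x * S1_norm_vec z"
    and "\<exists>x0. bounded_clinear x0 \<and> onorm x0 \<le> 1 \<and>
           (\<Sum>m\<in>UNIV. cinner (x0 (g m)) (z m)) = complex_of_real (S1_norm_vec z)"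
proof -
  obtain \<psi> :: "'n \<Rightarrow> complex^'n" and \<nu> :: "'n \<Rightarrow> real" and p :: "'n \<Rightarrow> 'a"
    where H: "orthonormal \<psi> \<and> (\<forall>n. \<nu> n \<ge> 0) \<and>
    (\<forall>n n'. cinner (p n) (p n') = (if n = n' then complex_of_real (\<nu> n) else 0)) \<and>
    (\<forall>k. z k = (\<Sum>n\<in>UNIV. scaleC (\<psi> n $ k) (p n))) \<and>
    (\<forall>n. gram z *v \<psi> n = scaleC (complex_of_real (\<nu> n)) (\<psi> n)) \<and>
    S1_norm_vec z = (\<Sum>n\<in>UNIV. sqrt (\<nu> n))"
    using gram_spectral[of z] by blast
  have on: "orthonormal \<psi>" and nu0: "\<And>n. \<nu> n \<ge> 0"
    and pp: "\<And>n n'. cinner (p n) (p n') = (if n = n' then complex_of_real (\<nu> n) else 0)"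
    and zd: "\<And>k. z k = (\<Sum>n\<in>UNIV. scaleC (\<psi> n $ k) (p n))"
    and eig: "\<And>n. gram z *v \<psi> n = scaleC (complex_of_real (\<nu> n)) (\<psi> n)"
    and S1: "S1_norm_vec z = (\<Sum>n\<in>UNIV. sqrt (\<nu> n))"
    using H by blast+
  define G where "G n = (\<Sum>m\<in>UNIV. scaleC (cnj (\<psi> n $ m)) (g m))" for n
  have Phi: "(\<Sum>m\<in>UNIV. cinner (x (g m)) (z m)) = (\<Sum>n\<in>UNIV. cinner (x (G n)) (p n))"
    if x: "bounded_clinear x" for x
  proof -
    have "(\<Sum>m\<in>UNIV. cinner (x (g m)) (z m)) = (\<Sum>m\<in>UNIV. \<Sum>n\<in>UNIV. cnj (\<psi> n $ m) * cinner (x (g m)) (p n))"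
      by (simp add: zd cinner_sum_right cinner_scaleC_right)
    also have "\<dots> = (\<Sum>n\<in>UNIV. \<Sum>m\<in>UNIV. cnj (\<psi> n $ m) * cinner (x (g m)) (p n))"
      by (rule sum.swap)
    also have "\<dots> = (\<Sum>n\<in>UNIV. cinner (x (G n)) (p n))"
      by (simp add: G_def clinear_sum[OF x] cinner_sum_left cinner_scaleC_left)
    finally show ?thesis .
  qed
  have np: "norm (p n) = sqrt (\<nu> n)" for n
  proof -
    have "complex_of_real ((norm (p n))\<^sup>2) = complex_of_real (\<nu> n)" using pp[of n n] by (simp add: cinner_self_norm)
    then have "(norm (p n))\<^sup>2 = \<nu> n" by (simp only: of_real_eq_iff)
    then show ?thesis by (metis norm_ge_zero real_sqrt_unique)
  qed
  have nG: "norm (G n) \<le> 1" for n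
  proof -
    have "(norm (G n))\<^sup>2 = (\<Sum>m\<in>I. (cmod (cnj (\<psi> n $ m)))\<^sup>2)"
      unfolding G_def by (rule norm_sq_onJ[OF og])
    also have "\<dots> \<le> (\<Sum>m\<in>UNIV. (cmod (\<psi> n $ m))\<^sup>2)"
      unfolding complex_mod_cnj by (intro sum_mono2) auto
    also have "\<dots> = (norm (\<psi> n))\<^sup>2" by (simp add: norm_vec_sq)
    also have "\<dots> = 1"
    proof -
      have "cinner (\<psi> n) (\<psi> n) = 1" using on by (simp add: orthonormal_def)
      then have "complex_of_real ((norm (\<psi> n))\<^sup>2) = 1" by (simp only: cinner_self_norm)
      then show ?thesis by (metis of_real_1 of_real_eq_iff)
    qed
    finally have "(norm (G n))\<^sup>2 \<le> 1\<^sup>2" by simp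
    then show ?thesis by (rule power2_le_imp_le) simp
  qed
  show "cmod (\<Sum>m\<in>UNIV. cinner (x (g m)) (z m)) \<le> onorm x * S1_norm_vec z" if x: "bounded_clinear x" for x
  proof -
    have blx: "bounded_linear x" using bounded_clinearD(1)[OF x] .
    have "cmod (\<Sum>m\<in>UNIV. cinner (x (g m)) (z m)) \<le> (\<Sum>n\<in>UNIV. cmod (cinner (x (G n)) (p n)))"
      unfolding Phi[OF x] by (rule norm_sum)
    also have "\<dots> \<le> (\<Sum>n\<in>UNIV. onorm x * sqrt (\<nu> n))"
    proof (rule sum_mono)
      fix n
      have "cmod (cinner (x (G n)) (p n)) \<le> norm (x (G n)) * norm (p n)" by (rule Cauchy_Schwarz)
      also have "\<dots> \<le> (onorm x * norm (G n)) * sqrt (\<nu> n)"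
        unfolding np using onorm[OF blx] nu0[of n] by (intro mult_right_mono) auto
      also have "\<dots> \<le> (onorm x * 1) * sqrt (\<nu> n)"
        using nG[of n] onorm_pos_le[OF blx] nu0[of n] by (intro mult_right_mono mult_left_mono) auto
      finally show "cmod (cinner (x (G n)) (p n)) \<le> onorm x * sqrt (\<nu> n)" by simp
    qed
    also have "\<dots> = onorm x * S1_norm_vec z" by (simp add: S1 sum_distrib_left)
    finally show ?thesis .
  qed
  define J where "J = {n. \<nu> n > 0}"
  have psi0: "\<psi> n $ m = 0" if "n \<in> J" "m \<notin> I" for n m
  proof -
    have "(gram z *v \<psi> n) $ m = 0" using z0[OF that(2)] by (simp add: gram_mv)
    then have "complex_of_real (\<nu> n) * \<psi> n $ m = 0" by (simp add: eig scaleC_cvec)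
    then show ?thesis using that(1) by (simp add: J_def)
  qed
  define e where "e n = (if n \<in> J then G n else 0)" for n
  define f where "f n = (if n \<in> J then scaleC (complex_of_real (1 / sqrt (\<nu> n))) (p n) else 0)" for n
  have GG: "cinner (G n) (G n') = (\<Sum>m\<in>UNIV. if m \<in> I then cnj (\<psi> n $ m) * \<psi> n' $ m else 0)" for n n'
  proof -
    have "cinner (G n) (G n') = (\<Sum>a\<in>UNIV. \<Sum>b\<in>UNIV. if b = a then (if a \<in> I then cnj (\<psi> n $ a) * \<psi> n' $ a else 0) else 0)"
      unfolding G_def cinner_sums using og by (intro sum.cong refl) (auto simp: onJ_def)
    also have "\<dots> = (\<Sum>m\<in>UNIV. if m \<in> I then cnj (\<psi> n $ m) * \<psi> n' $ m else 0)"
      by (simp add: sum.delta)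
    finally show ?thesis .
  qed
  have oe: "onJ J e"
    unfolding onJ_def
  proof (intro allI)
    fix n n'
    show "cinner (e n) (e n') = (if n = n' \<and> n \<in> J then 1 else 0)"
    proof (cases "n \<in> J \<and> n' \<in> J")
      case True
      have "cinner (e n) (e n') = (\<Sum>m\<in>UNIV. cnj (\<psi> n $ m) * \<psi> n' $ m)"
        using True by (simp add: e_def GG) (intro sum.cong refl, auto simp: psi0)
      also have "\<dots> = cinner (\<psi> n') (\<psi> n)" by (simp add: cinner_cvec mult.commute)
      also have "\<dots> = (if n = n' \<and> n \<in> J then 1 else 0)" using on True by (auto simp: orthonormal_def)
      finally show ?thesis .
    next
      case False
      then show ?thesis by (auto simp: e_def)
    qed
  qed
  have of: "onJ J f"
    unfolding onJ_def
  proof (intro allI)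
    fix n n'
    show "cinner (f n) (f n') = (if n = n' \<and> n \<in> J then 1 else 0)"
    proof (cases "n \<in> J \<and> n' \<in> J")
      case True
      then have "\<nu> n > 0" by (simp add: J_def)
      then show ?thesis using True
        by (auto simp: f_def cinner_scaleC_left cinner_scaleC_right pp field_simps
            simp flip: of_real_mult)
    next
      case False
      then show ?thesis by (auto simp: f_def)
    qed
  qed
  define x0 where "x0 = (\<lambda>y. \<Sum>n\<in>UNIV. scaleC (cinner y (e n)) (f n))"
  have x0: "bounded_clinear x0" "onorm x0 \<le> 1" "\<And>n. n \<in> J \<Longrightarrow> x0 (e n) = f n"
    unfolding x0_def by (rule partial_iso[OF oe of])+
  have "(\<Sum>m\<in>UNIV. cinner (x0 (g m)) (z m)) = (\<Sum>n\<in>UNIV. cinner (x0 (G n)) (p n))"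
    by (rule Phi[OF x0(1)])
  also have "\<dots> = (\<Sum>n\<in>UNIV. complex_of_real (sqrt (\<nu> n)))"
  proof (rule sum.cong[OF refl])
    fix n
    show "cinner (x0 (G n)) (p n) = complex_of_real (sqrt (\<nu> n))"
    proof (cases "n \<in> J")
      case True
      then have nu: "\<nu> n > 0" by (simp add: J_def)
      have "x0 (G n) = f n" using x0(3)[OF True] True by (simp add: e_def)
      have r: "1 / sqrt (\<nu> n) * \<nu> n = sqrt (\<nu> n)"
        using real_div_sqrt[of "\<nu> n"] nu by simp
      have "cinner (f n) (p n) = complex_of_real (1 / sqrt (\<nu> n)) * complex_of_real (\<nu> n)"
        using True by (simp add: f_def cinner_scaleC_left pp del: of_real_divide)
      also have "\<dots> = complex_of_real (sqrt (\<nu> n))"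
        by (simp only: of_real_mult[symmetric] r)
      finally show ?thesis using \<open>x0 (G n) = f n\<close> by simp
    next
      case False
      then have "\<nu> n = 0" using nu0[of n] by (simp add: J_def)
      then have "p n = 0" using pp[of n n] by simp
      then show ?thesis using \<open>\<nu> n = 0\<close> by simp
    qed
  qed
  also have "\<dots> = complex_of_real (S1_norm_vec z)" by (simp add: S1)
  finally show "\<exists>x0. bounded_clinear x0 \<and> onorm x0 \<le> 1 \<and>
           (\<Sum>m\<in>UNIV. cinner (x0 (g m)) (z m)) = complex_of_real (S1_norm_vec z)"
    using x0 by blast
qed



lemma key_generic:
  fixes v w :: "'n::finite \<Rightarrow> 'a::chilbert_space"
  defines "u \<equiv> (\<lambda>k. \<Sum>j\<in>UNIV. scaleC (msqrt (gram v) $ k $ j) (w j))"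
  shows "\<And>x. bounded_clinear x \<Longrightarrow> cmod (\<Sum>j\<in>UNIV. cinner (x (v j)) (w j)) \<le> onorm x * S1_norm_vec u"
    and "\<exists>x0. bounded_clinear x0 \<and> onorm x0 \<le> 1 \<and>
           (\<Sum>j\<in>UNIV. cinner (x0 (v j)) (w j)) = complex_of_real (S1_norm_vec u)"
proof -
  obtain \<phi> :: "'n \<Rightarrow> complex^'n" and \<mu> :: "'n \<Rightarrow> real" and h :: "'n \<Rightarrow> 'a"
    where H: "orthonormal \<phi> \<and> (\<forall>n. \<mu> n \<ge> 0) \<and>
    (\<forall>n n'. cinner (h n) (h n') = (if n = n' then complex_of_real (\<mu> n) else 0)) \<and>
    (\<forall>k. v k = (\<Sum>n\<in>UNIV. scaleC (\<phi> n $ k) (h n))) \<and>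
    (\<forall>n. gram v *v \<phi> n = scaleC (complex_of_real (\<mu> n)) (\<phi> n)) \<and>
    S1_norm_vec v = (\<Sum>n\<in>UNIV. sqrt (\<mu> n))"
    using gram_spectral[of v] by blast
  have on: "orthonormal \<phi>" and mu0: "\<And>n. \<mu> n \<ge> 0"
    and hh: "\<And>n n'. cinner (h n) (h n') = (if n = n' then complex_of_real (\<mu> n) else 0)"
    and vd: "\<And>k. v k = (\<Sum>n\<in>UNIV. scaleC (\<phi> n $ k) (h n))"
    and eig: "\<And>n. gram v *v \<phi> n = scaleC (complex_of_real (\<mu> n)) (\<phi> n)"
    using H by blast+
  have S: "msqrt (gram v) = rk1 (\<lambda>m. complex_of_real (sqrt (\<mu> m))) \<phi>"
    by (rule msqrt_eig(1)[OF on mu0 eig])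
  define I where "I = {m. \<mu> m > 0}"
  define g where "g m = (if m \<in> I then scaleC (complex_of_real (1 / sqrt (\<mu> m))) (h m) else 0)" for m
  have og: "onJ I g"
    unfolding onJ_def
  proof (intro allI)
    fix n n'
    show "cinner (g n) (g n') = (if n = n' \<and> n \<in> I then 1 else 0)"
    proof (cases "n \<in> I \<and> n' \<in> I")
      case True
      then have "\<mu> n > 0" by (simp add: I_def)
      then show ?thesis using True
        by (auto simp: g_def cinner_scaleC_left cinner_scaleC_right hh field_simps
            simp flip: of_real_mult)
    next
      case False
      then show ?thesis by (auto simp: g_def)
    qed
  qed
  have hg: "h m = scaleC (complex_of_real (sqrt (\<mu> m))) (g m)" for m
  proof (cases "m \<in> I")
    case True
    then have "\<mu> m > 0" by (simp add: I_def)
    then have "complex_of_real (sqrt (\<mu> m)) * complex_of_real (1 / sqrt (\<mu> m)) = 1"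
      by (simp flip: of_real_mult)
    then show ?thesis using True by (simp add: g_def scaleC_scaleC scaleC_one)
  next
    case False
    then have "\<mu> m = 0" using mu0[of m] by (simp add: I_def)
    then have "h m = 0" using hh[of m m] by simp
    then show ?thesis using \<open>\<mu> m = 0\<close> by simp
  qed
  define z where "z m = (\<Sum>j\<in>UNIV. scaleC (complex_of_real (sqrt (\<mu> m)) * cnj (\<phi> m $ j)) (w j))" for m
  have z0: "z m = 0" if "m \<notin> I" for m
  proof -
    have "\<mu> m = 0" using mu0[of m] that by (simp add: I_def)
    then show ?thesis by (simp add: z_def)
  qed
  have Phi: "(\<Sum>j\<in>UNIV. cinner (x (v j)) (w j)) = (\<Sum>m\<in>UNIV. cinner (x (g m)) (z m))"
    if x: "bounded_clinear x" for x
  proof -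
    have "(\<Sum>j\<in>UNIV. cinner (x (v j)) (w j))
        = (\<Sum>j\<in>UNIV. \<Sum>m\<in>UNIV. \<phi> m $ j * complex_of_real (sqrt (\<mu> m)) * cinner (x (g m)) (w j))"
      by (simp add: vd hg clinear_sum[OF x] bounded_clinearD(2)[OF x] scaleC_scaleC cinner_sum_left cinner_scaleC_left)
    also have "\<dots> = (\<Sum>m\<in>UNIV. \<Sum>j\<in>UNIV. \<phi> m $ j * complex_of_real (sqrt (\<mu> m)) * cinner (x (g m)) (w j))"
      by (rule sum.swap)
    also have "\<dots> = (\<Sum>m\<in>UNIV. cinner (x (g m)) (z m))"
      by (simp add: z_def cinner_sum_right cinner_scaleC_right mult.commute mult.left_commute)
    finally show ?thesis .
  qed
  have ud: "u k = (\<Sum>m\<in>UNIV. scaleC (\<phi> m $ k) (z m))" for k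
  proof -
    have "u k = (\<Sum>j\<in>UNIV. \<Sum>m\<in>UNIV. scaleC (complex_of_real (sqrt (\<mu> m)) * \<phi> m $ k * cnj (\<phi> m $ j)) (w j))"
      by (simp add: u_def S rk1_def scaleC_sum_left)
    also have "\<dots> = (\<Sum>m\<in>UNIV. \<Sum>j\<in>UNIV. scaleC (complex_of_real (sqrt (\<mu> m)) * \<phi> m $ k * cnj (\<phi> m $ j)) (w j))"
      by (rule sum.swap)
    also have "\<dots> = (\<Sum>m\<in>UNIV. scaleC (\<phi> m $ k) (z m))"
      by (simp add: z_def scaleC_sum_right scaleC_scaleC mult.commute mult.left_commute)
    finally show ?thesis .
  qed
  have S1uz: "S1_norm_vec u = S1_norm_vec z"
  proof -
    obtain \<psi> :: "'n \<Rightarrow> complex^'n" and \<nu> :: "'n \<Rightarrow> real" and p :: "'n \<Rightarrow> 'a"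
      where H2: "orthonormal \<psi> \<and> (\<forall>n. \<nu> n \<ge> 0) \<and>
      (\<forall>n n'. cinner (p n) (p n') = (if n = n' then complex_of_real (\<nu> n) else 0)) \<and>
      (\<forall>k. z k = (\<Sum>n\<in>UNIV. scaleC (\<psi> n $ k) (p n))) \<and>
      (\<forall>n. gram z *v \<psi> n = scaleC (complex_of_real (\<nu> n)) (\<psi> n)) \<and>
      S1_norm_vec z = (\<Sum>n\<in>UNIV. sqrt (\<nu> n))"
      using gram_spectral[of z] by blast
    have on2: "orthonormal \<psi>"
      and pp: "\<And>n n'. cinner (p n) (p n') = (if n = n' then complex_of_real (\<nu> n) else 0)"
      and zd: "\<And>k. z k = (\<Sum>n\<in>UNIV. scaleC (\<psi> n $ k) (p n))"
      and S1z: "S1_norm_vec z = (\<Sum>n\<in>UNIV. sqrt (\<nu> n))"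
      using H2 by blast+
    define \<kappa> :: "'n \<Rightarrow> complex^'n" where "\<kappa> n = (\<Sum>m\<in>UNIV. scaleC (\<psi> n $ m) (\<phi> m))" for n
    have ok: "orthonormal \<kappa>"
    proof -
      have "cinner (\<kappa> n) (\<kappa> n') = cinner (\<psi> n) (\<psi> n')" for n n'
      proof -
        have "cinner (\<kappa> n) (\<kappa> n') = (\<Sum>a\<in>UNIV. \<Sum>b\<in>UNIV. if b = a then \<psi> n $ a * cnj (\<psi> n' $ a) else 0)"
          unfolding \<kappa>_def cinner_sums using on by (intro sum.cong refl) (auto simp: orthonormal_def)
        also have "\<dots> = cinner (\<psi> n) (\<psi> n')" by (simp add: sum.delta cinner_cvec)
        finally show ?thesis .
      qed
      then show ?thesis using on2 by (simp add: orthonormal_def)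
    qed
    have ud2: "u k = (\<Sum>n\<in>UNIV. scaleC (\<kappa> n $ k) (p n))" for k
    proof -
      have "u k = (\<Sum>m\<in>UNIV. \<Sum>n\<in>UNIV. scaleC (\<phi> m $ k * \<psi> n $ m) (p n))"
        by (simp add: ud zd scaleC_sum_right scaleC_scaleC)
      also have "\<dots> = (\<Sum>n\<in>UNIV. \<Sum>m\<in>UNIV. scaleC (\<phi> m $ k * \<psi> n $ m) (p n))"
        by (rule sum.swap)
      also have "\<dots> = (\<Sum>n\<in>UNIV. scaleC (\<kappa> n $ k) (p n))"
        by (simp add: \<kappa>_def scaleC_cvec scaleC_sum_left mult.commute)
      finally show ?thesis .
    qed
    show ?thesis using trace_from_decomp(1)[OF ok pp ud2] S1z by simp
  qed
  show "cmod (\<Sum>j\<in>UNIV. cinner (x (v j)) (w j)) \<le> onorm x * S1_norm_vec u" if "bounded_clinear x" for x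
    unfolding Phi[OF that] S1uz by (rule duality(1)[OF og z0 that])
  obtain x0 where x0: "bounded_clinear x0" "onorm x0 \<le> 1"
    "(\<Sum>m\<in>UNIV. cinner (x0 (g m)) (z m)) = complex_of_real (S1_norm_vec z)"
    using duality(2)[of I g z, OF og z0] by blast
  then show "\<exists>x0. bounded_clinear x0 \<and> onorm x0 \<le> 1 \<and>
           (\<Sum>j\<in>UNIV. cinner (x0 (v j)) (w j)) = complex_of_real (S1_norm_vec u)"
    using Phi[OF x0(1)] S1uz by metis
qed



lemma gram_Q: "transpose (Qmat b \<eta>) = gram (\<lambda>j. b j \<eta>)"
  by (simp add: vec_eq_iff transpose_def Qmat_def gram_def)

lemma S1_nonneg: "S1_norm_vec (u::'n::finite \<Rightarrow> 'a::chilbert_space) \<ge> 0"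
proof -
  obtain \<psi> :: "'n \<Rightarrow> complex^'n" and \<nu> :: "'n \<Rightarrow> real" and p :: "'n \<Rightarrow> 'a"
    where H: "orthonormal \<psi> \<and> (\<forall>n. \<nu> n \<ge> 0) \<and>
    (\<forall>n n'. cinner (p n) (p n') = (if n = n' then complex_of_real (\<nu> n) else 0)) \<and>
    (\<forall>k. u k = (\<Sum>n\<in>UNIV. scaleC (\<psi> n $ k) (p n))) \<and>
    (\<forall>n. gram u *v \<psi> n = scaleC (complex_of_real (\<nu> n)) (\<psi> n)) \<and>
    S1_norm_vec u = (\<Sum>n\<in>UNIV. sqrt (\<nu> n))"
    using gram_spectral[of u] by blast
  then show ?thesis by (simp add: sum_nonneg)
qed

theorem theorem1p10:
  fixes a b :: "'n::finite \<Rightarrow> ('a::chilbert_space \<Rightarrow> 'a)"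
  assumes "\<exists>x::'a. x \<noteq> 0"
    and "\<And>j. bounded_clinear (a j)"
    and "\<And>j. bounded_clinear (b j)"
  shows "BH_map_norm (elem_op a b) =
    Sup {S1_norm_col (mat_times_adj_col (msqrt (transpose (Qmat b \<eta>))) a) | \<eta>. norm \<eta> = 1}"
proof -
  note ca = assms(2) and cb = assms(3)
  have bla: "bounded_linear (a j)" for j using bounded_clinearD(1)[OF ca] .
  have blb: "bounded_linear (b j)" for j using bounded_clinearD(1)[OF cb] .
  define T where "T = elem_op a b"
  define K where "K = (\<Sum>j\<in>UNIV. onorm (a j) * onorm (b j))"
  define U where "U \<eta> \<xi> = (\<lambda>i. mat_times_adj_col (msqrt (transpose (Qmat b \<eta>))) a i \<xi>)" for \<eta> \<xi>
  have K0: "K \<ge> 0" unfolding K_def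
    by (intro sum_nonneg mult_nonneg_nonneg onorm_pos_le bla blb)
  have blT: "bounded_linear (T x)" if x: "bounded_clinear x" for x
    unfolding T_def elem_op_def
    by (intro bounded_linear_sum bounded_linear_compose[OF bla] bounded_linear_compose[OF bounded_clinearD(1)[OF x]] blb)
  have nT: "norm (T x \<eta>) \<le> K * norm \<eta>" if x: "bounded_clinear x" and x1: "onorm x \<le> 1" for x \<eta>
  proof -
    have blx: "bounded_linear x" using bounded_clinearD(1)[OF x] .
    have "norm (T x \<eta>) \<le> (\<Sum>j\<in>UNIV. norm (a j (x (b j \<eta>))))"
      unfolding T_def elem_op_def by (rule norm_sum)
    also have "\<dots> \<le> (\<Sum>j\<in>UNIV. onorm (a j) * onorm (b j) * norm \<eta>)"
    proof (rule sum_mono)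
      fix j
      have "norm (a j (x (b j \<eta>))) \<le> onorm (a j) * norm (x (b j \<eta>))" by (rule onorm[OF bla])
      also have "\<dots> \<le> onorm (a j) * (onorm x * norm (b j \<eta>))"
        by (intro mult_left_mono onorm[OF blx] onorm_pos_le[OF bla])
      also have "\<dots> \<le> onorm (a j) * (1 * (onorm (b j) * norm \<eta>))"
        by (intro mult_left_mono mult_mono x1 onorm[OF blb] onorm_pos_le[OF bla]) auto
      finally show "norm (a j (x (b j \<eta>))) \<le> onorm (a j) * onorm (b j) * norm \<eta>" by (simp add: mult.assoc)
    qed
    also have "\<dots> = K * norm \<eta>" by (simp add: K_def sum_distrib_right)
    finally show ?thesis .
  qed
  have oT: "onorm (T x) \<le> K" if "bounded_clinear x" "onorm x \<le> 1" for x
    by (rule onorm_bound[OF K0 nT[OF that]])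
  have PhiT: "cinner (T x \<eta>) \<xi> = (\<Sum>j\<in>UNIV. cinner (x (b j \<eta>)) (adj (a j) \<xi>))" for x \<eta> \<xi>
    by (simp add: T_def elem_op_def cinner_sum_left adj_works[OF ca])
  have Ueq: "U \<eta> \<xi> = (\<lambda>k. \<Sum>j\<in>UNIV. scaleC (msqrt (gram (\<lambda>j. b j \<eta>)) $ k $ j) (adj (a j) \<xi>))" for \<eta> \<xi>
    by (simp add: U_def mat_times_adj_col_def gram_Q)
  have key1: "cmod (cinner (T x \<eta>) \<xi>) \<le> onorm x * S1_norm_vec (U \<eta> \<xi>)" if "bounded_clinear x" for x \<eta> \<xi>
    unfolding PhiT Ueq by (rule key_generic(1)[OF that])
  have key2: "\<exists>x0. bounded_clinear x0 \<and> onorm x0 \<le> 1 \<and> cinner (T x0 \<eta>) \<xi> = complex_of_real (S1_norm_vec (U \<eta> \<xi>))" for \<eta> \<xi>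
    unfolding PhiT Ueq by (rule key_generic(2))
  define A where "A = {onorm (T x) | x. bounded_clinear x \<and> onorm x \<le> 1}"
  have LHS: "BH_map_norm (elem_op a b) = Sup A" by (simp add: BH_map_norm_def A_def T_def)
  have Ane: "A \<noteq> {}"
  proof -
    have "bounded_clinear (\<lambda>x::'a. 0::'a)" by (simp add: bounded_clinear_def)
    then have "onorm (T (\<lambda>x. 0)) \<in> A" by (auto simp: A_def onorm_zero)
    then show ?thesis by blast
  qed
  have Abdd: "bdd_above A" by (rule bdd_aboveI[where M = K]) (auto simp: A_def intro: oT)
  have S1le: "S1_norm_vec (U \<eta> \<xi>) \<le> Sup A \<and> S1_norm_vec (U \<eta> \<xi>) \<le> K" if "norm \<eta> = 1" "norm \<xi> \<le> 1" for \<eta> \<xi>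
  proof -
    obtain x0 where x0: "bounded_clinear x0" "onorm x0 \<le> 1"
      and e: "cinner (T x0 \<eta>) \<xi> = complex_of_real (S1_norm_vec (U \<eta> \<xi>))"
      using key2 by blast
    have "S1_norm_vec (U \<eta> \<xi>) = Re (cinner (T x0 \<eta>) \<xi>)" by (simp add: e)
    also have "\<dots> \<le> cmod (cinner (T x0 \<eta>) \<xi>)" by (rule complex_Re_le_cmod)
    also have "\<dots> \<le> norm (T x0 \<eta>) * norm \<xi>" by (rule Cauchy_Schwarz)
    also have "\<dots> \<le> norm (T x0 \<eta>) * 1" using that by (intro mult_left_mono) auto
    also have "\<dots> \<le> onorm (T x0) * norm \<eta>" using onorm[OF blT[OF x0(1)]] by simp
    also have "\<dots> = onorm (T x0)" using that by simp
    finally have le: "S1_norm_vec (U \<eta> \<xi>) \<le> onorm (T x0)" .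
    have "onorm (T x0) \<in> A" using x0 by (auto simp: A_def)
    then have "onorm (T x0) \<le> Sup A" using Abdd by (rule cSup_upper)
    then show ?thesis using le oT[OF x0] by linarith
  qed
  define B where "B \<eta> = {S1_norm_vec (U \<eta> \<xi>) | \<xi>. norm \<xi> \<le> 1}" for \<eta>
  have colB: "S1_norm_col (mat_times_adj_col (msqrt (transpose (Qmat b \<eta>))) a) = Sup (B \<eta>)" for \<eta>
    by (simp add: S1_norm_col_def B_def U_def)
  have Bne: "B \<eta> \<noteq> {}" for \<eta>
  proof -
    have "S1_norm_vec (U \<eta> 0) \<in> B \<eta>" by (auto simp: B_def)
    then show ?thesis by blast
  qed
  have Bbdd: "bdd_above (B \<eta>)" if "norm \<eta> = 1" for \<eta>
    by (rule bdd_aboveI[where M = K]) (use S1le[OF that] in \<open>auto simp: B_def\<close>)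
  define C where "C = {Sup (B \<eta>) | \<eta>. norm \<eta> = 1}"
  have RHS: "{S1_norm_col (mat_times_adj_col (msqrt (transpose (Qmat b \<eta>))) a) | \<eta>. norm \<eta> = 1} = C"
    by (simp add: colB C_def)
  obtain x1 :: 'a where x1: "x1 \<noteq> 0" using assms(1) by blast
  define \<eta>0 where "\<eta>0 = (1 / norm x1) *\<^sub>R x1"
  have n\<eta>0: "norm \<eta>0 = 1" using x1 by (simp add: \<eta>0_def)
  have Cne: "C \<noteq> {}" using n\<eta>0 by (auto simp: C_def)
  have Cbdd: "bdd_above C"
  proof -
    have "Sup (B \<eta>) \<le> K" if "norm \<eta> = 1" for \<eta>
      using S1le[OF that] by (intro cSup_least[OF Bne]) (auto simp: B_def)
    then show ?thesis by (intro bdd_aboveI[where M = K]) (auto simp: C_def)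
  qed
  have SupB: "S1_norm_vec (U \<eta> \<xi>) \<le> Sup C" if "norm \<eta> = 1" "norm \<xi> \<le> 1" for \<eta> \<xi>
  proof -
    have "S1_norm_vec (U \<eta> \<xi>) \<le> Sup (B \<eta>)"
      using that by (intro cSup_upper Bbdd) (auto simp: B_def)
    also have "Sup (B \<eta>) \<le> Sup C" using that by (intro cSup_upper Cbdd) (auto simp: C_def)
    finally show ?thesis .
  qed
  have C0: "Sup C \<ge> 0" using SupB[OF n\<eta>0, of 0] S1_nonneg[of "U \<eta>0 0"] by simp
  have "Sup A \<le> Sup C"
  proof (rule cSup_least[OF Ane])
    fix y assume "y \<in> A"
    then obtain x where x: "bounded_clinear x" "onorm x \<le> 1" and y: "y = onorm (T x)"
      by (auto simp: A_def)
    interpret Tx: bounded_linear "T x" by (rule blT[OF x(1)])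
    have unit: "norm (T x \<eta>1) \<le> Sup C" if n1: "norm \<eta>1 = 1" for \<eta>1
    proof (cases "T x \<eta>1 = 0")
      case True then show ?thesis using C0 by simp
    next
      case False
      define w where "w = T x \<eta>1"
      define \<xi> where "\<xi> = (1 / norm w) *\<^sub>R w"
      have nw: "norm w > 0" using False by (simp add: w_def)
      have n\<xi>: "norm \<xi> = 1" using nw by (simp add: \<xi>_def)
      have "cinner w \<xi> = complex_of_real (1 / norm w) * cinner w w"
        by (simp add: \<xi>_def scaleR_scaleC cinner_scaleC_right)
      also have "\<dots> = complex_of_real (norm w)"
        using nw by (simp add: cinner_self_norm power2_eq_square del: of_real_divide)
          (simp flip: of_real_mult)
      finally have "norm w = cmod (cinner (T x \<eta>1) \<xi>)" by (simp add: w_def)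
      also have "\<dots> \<le> onorm x * S1_norm_vec (U \<eta>1 \<xi>)" by (rule key1[OF x(1)])
      also have "\<dots> \<le> 1 * S1_norm_vec (U \<eta>1 \<xi>)"
        using x(2) S1_nonneg by (intro mult_right_mono) auto
      also have "\<dots> \<le> Sup C" using SupB[OF n1] n\<xi> by simp
      finally show ?thesis by (simp add: w_def)
    qed
    have "norm (T x \<eta>) \<le> Sup C * norm \<eta>" for \<eta>
    proof (cases "\<eta> = 0")
      case True then show ?thesis by (simp add: Tx.zero)
    next
      case False
      define \<eta>1 where "\<eta>1 = (1 / norm \<eta>) *\<^sub>R \<eta>"
      have n1: "norm \<eta>1 = 1" using False by (simp add: \<eta>1_def)
      have "\<eta> = norm \<eta> *\<^sub>R \<eta>1" using False by (simp add: \<eta>1_def)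
      then have "T x \<eta> = norm \<eta> *\<^sub>R T x \<eta>1" by (metis Tx.scale)
      then have "norm (T x \<eta>) = norm \<eta> * norm (T x \<eta>1)" by simp
      also have "\<dots> \<le> norm \<eta> * Sup C" using unit[OF n1] by (intro mult_left_mono) auto
      finally show ?thesis by (simp add: mult.commute)
    qed
    then show "y \<le> Sup C" unfolding y by (intro onorm_bound C0)
  qed
  moreover have "Sup C \<le> Sup A"
  proof (rule cSup_least[OF Cne])
    fix y assume "y \<in> C"
    then obtain \<eta> where n: "norm \<eta> = 1" and y: "y = Sup (B \<eta>)" by (auto simp: C_def)
    show "y \<le> Sup A" unfolding y
      using S1le[OF n] by (intro cSup_least[OF Bne]) (auto simp: B_def)
  qed
  ultimately show ?thesis unfolding LHS RHS by simp
qed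


end
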